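(* For every $m\ge1$, the sequences $\big(\#R_n(1/2/\ldots/m)\big)_{n\ge0}$ and $\big(\#R_n(12\ldots m)\big)_{n\ge0}$ are P-recursive. Furthermore, for every partition $\pi$ of $[3]$, the sequence $\big(\#R_n(\pi)\big)_{n\ge0}$ is P-recursive.
   Context: $\Pi_n$ is the set of partitions of $[n]$. A partition $B_1/\ldots/B_k$ is in canonical order if $\min B_1<\cdots<\min B_k$; its restricted growth function is $\rho(\pi)=a_1\ldots a_n$ where $a_i$ is the index of the block containing $i$. A sequence contains $r$ if some subsequence standardizes (order-preserving relabeling of values onto $1,2,\ldots$) to $r$. $\sigma$ R-avoids $\pi$ if $\rho(\sigma)$ does not contain $\rho(\pi)$; $R_n(\pi)$ is the set of $\sigma\in\Pi_n$ R-avoiding $\pi$. A sequence $(a_n)$ is P-recursive if there are polynomials $P_0,\ldots,P_k$, not all zero, with $\sum_{i=0}^kP_i(n)a_{n+i}=0$ for all $n\ge0$. *)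

theory Defs
  imports "HOL-Library.Disjoint_Sets" "HOL-Computational_Algebra.Polynomial"
begin

definition Pi_set :: "nat \<Rightarrow> nat set set set" where
  "Pi_set n = {\<sigma>. partition_on {1..n} \<sigma>}"

text \<open>Restricted growth function: a_i is the index of the block containing i
  when the blocks are listed in canonical order (by increasing minima), i.e. the
  number of blocks whose minimum is at most the minimum of the block of i.\<close>
definition block_of :: "nat set set \<Rightarrow> nat \<Rightarrow> nat set" where
  "block_of \<sigma> i = (THE B. B \<in> \<sigma> \<and> i \<in> B)"

definition rgf :: "nat set set \<Rightarrow> nat list" where
  "rgf \<sigma> = map (\<lambda>i. card {B \<in> \<sigma>. Min B \<le> Min (block_of \<sigma> i)})
                (sorted_list_of_set (\<Union>\<sigma>))"

text \<open>Standardization: order-preserving relabeling of the values onto 1,2,...\<close>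
definition standardize :: "nat list \<Rightarrow> nat list" where
  "standardize s = map (\<lambda>x. card {y \<in> set s. y \<le> x}) s"

definition contains :: "nat list \<Rightarrow> nat list \<Rightarrow> bool" where
  "contains w r \<longleftrightarrow> (\<exists>I. standardize (nths w I) = r)"

definition R_avoid :: "nat \<Rightarrow> nat set set \<Rightarrow> nat set set set" where
  "R_avoid n \<pi> = {\<sigma> \<in> Pi_set n. \<not> contains (rgf \<sigma>) (rgf \<pi>)}"

definition singletons_part :: "nat \<Rightarrow> nat set set" where
  "singletons_part m = (\<lambda>i. {i}) ` {1..m}"

definition one_block_part :: "nat \<Rightarrow> nat set set" where
  "one_block_part m = {{1..m}}"

definition P_recursive :: "(nat \<Rightarrow> nat) \<Rightarrow> bool" where
  "P_recursive a \<longleftrightarrow> (\<exists>k (P :: nat \<Rightarrow> rat poly). (\<exists>i\<le>k. P i \<noteq> 0) \<and>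
     (\<forall>n. (\<Sum>i\<le>k. poly (P i) (of_nat n) * of_nat (a (n + i))) = 0))"

end

theory Submission
  imports Defs "HOL-Library.Sublist"
begin

definition mx :: "nat list \<Rightarrow> nat" where "mx w = Max (insert 0 (set w))"
definition rgfw :: "nat list \<Rightarrow> bool" where
  "rgfw w \<longleftrightarrow> (\<forall>i<length w. 0 < w!i \<and> w!i \<le> Suc (mx (take i w)))"
definition RG :: "nat \<Rightarrow> nat list set" where "RG n = {w. length w = n \<and> rgfw w}"

lemma mx_Nil[simp]: "mx [] = 0" by (simp add: mx_def)
lemma mx_Cons: "mx (x#w) = max x (mx w)"
  unfolding mx_def using Max_insert[of "insert 0 (set w)" x] by (simp add: insert_commute)
lemma mx_snoc[simp]: "mx (w@[x]) = max (mx w) x"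
  unfolding mx_def using Max_insert[of "insert 0 (set w)" x] by (simp add: insert_commute max.commute)
lemma mx_ge: "x \<in> set w \<Longrightarrow> x \<le> mx w" by (simp add: mx_def)
lemma mx_le: "(\<forall>x\<in>set w. x \<le> b) \<Longrightarrow> mx w \<le> b" by (simp add: mx_def)
lemma mx_in: "w \<noteq> [] \<Longrightarrow> mx w \<in> set w"
proof (induction w rule: rev_induct)
  case (snoc x xs) then show ?case by (cases "xs = []") (auto simp: max_def mx_def)
qed simp

lemma rgfw_snoc: "rgfw (w@[x]) \<longleftrightarrow> rgfw w \<and> 0<x \<and> x \<le> Suc (mx w)"
  unfolding rgfw_def
proof safe
  fix i assume "\<forall>i<length (w @ [x]). 0 < (w @ [x]) ! i \<and> (w @ [x]) ! i \<le> Suc (mx (take i (w @ [x])))"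
    and i: "i < length w"
  then have "0 < (w @ [x]) ! i \<and> (w @ [x]) ! i \<le> Suc (mx (take i (w @ [x])))" by simp
  then show "0 < w!i" "w!i \<le> Suc (mx (take i w))" using i by (auto simp: nth_append)
next
  assume A: "\<forall>i<length (w @ [x]). 0 < (w @ [x]) ! i \<and> (w @ [x]) ! i \<le> Suc (mx (take i (w @ [x])))"
  have "0 < (w @ [x]) ! length w \<and> (w @ [x]) ! length w \<le> Suc (mx (take (length w) (w @ [x])))" 
    using A[rule_format, of "length w"] by simp
  then show "0 < x" "x \<le> Suc (mx w)" by auto
next
  fix i assume "\<forall>i<length w. 0 < w ! i \<and> w ! i \<le> Suc (mx (take i w))" "0 < x" "x \<le> Suc (mx w)"
    "i < length (w @ [x])"
  then show "0 < (w @ [x]) ! i" "(w @ [x]) ! i \<le> Suc (mx (take i (w @ [x])))"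
    by (auto simp: nth_append less_Suc_eq)
qed

lemma rgfw_Nil[simp]: "rgfw []" by (simp add: rgfw_def)

lemma rgfw_take: "rgfw w \<Longrightarrow> rgfw (take k w)"
  unfolding rgfw_def
proof (intro allI impI)
  fix i assume A: "\<forall>i<length w. 0 < w ! i \<and> w ! i \<le> Suc (mx (take i w))" and i: "i < length (take k w)"
  then have "i < k" "i < length w" by auto
  then show "0 < take k w ! i \<and> take k w ! i \<le> Suc (mx (take i (take k w)))"
    using A[rule_format, of i] by (simp add: min_def)
qed

lemma rgfw_set: "rgfw w \<Longrightarrow> set w = {1..mx w}"
proof (induction w rule: rev_induct)
  case (snoc x xs)
  from snoc.prems have H: "rgfw xs \<and> 0<x \<and> x \<le> Suc (mx xs)" by (simp only: rgfw_snoc)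
  then have IH: "set xs = {1..mx xs}" using snoc.IH by blast
  show ?case
  proof (cases "x \<le> mx xs")
    case True
    then have "mx (xs@[x]) = mx xs" by simp
    moreover have "x \<in> {1..mx xs}" using True H by simp
    ultimately show ?thesis using IH by (simp add: insert_absorb)
  next
    case False
    then have "x = Suc (mx xs)" using H by simp
    then show ?thesis using IH atLeastAtMostSuc_conv[of 1 "mx xs"] by simp
  qed
qed simp

lemma rgfw_pos: "rgfw w \<Longrightarrow> x \<in> set w \<Longrightarrow> 0 < x"
  by (simp add: rgfw_set)

lemma rgfw_before:
  assumes "rgfw w" "p < length w" "1 \<le> v" "v < w!p"
  shows "\<exists>q<p. w!q = v"
proof -
  have "w!p \<le> Suc (mx (take p w))" using assms unfolding rgfw_def by auto
  then have "v \<in> set (take p w)" using rgfw_set[OF rgfw_take[OF assms(1)], of p] assms by auto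
  then show ?thesis using assms(2) by (auto simp: in_set_conv_nth)
qed

lemma rgfw_mx_le: "rgfw w \<Longrightarrow> mx w \<le> length w"
proof -
  assume "rgfw w"
  then have "card {1..mx w} = card (set w)" using rgfw_set by simp
  also have "\<dots> \<le> length w" by (rule card_length)
  finally show ?thesis by simp
qed

lemma finite_RG: "finite (RG n)"
proof -
  have "RG n \<subseteq> {w. set w \<subseteq> {0..n} \<and> length w = n}"
  proof
    fix w assume "w \<in> RG n"
    then have "rgfw w" "length w = n" by (auto simp: RG_def)
    then show "w \<in> {w. set w \<subseteq> {0..n} \<and> length w = n}"
      using rgfw_mx_le[of w] mx_ge[of _ w] by fastforce
  qed
  then show ?thesis using finite_lists_length_eq[of "{0..n}" n] finite_subset by blast
qed

lemma block_of_eq: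
  assumes "partition_on A \<sigma>" "B \<in> \<sigma>" "i \<in> B"
  shows "block_of \<sigma> i = B"
  unfolding block_of_def
proof (rule the_equality)
  show "B \<in> \<sigma> \<and> i \<in> B" using assms by simp
next
  fix C assume "C \<in> \<sigma> \<and> i \<in> C"
  then show "C = B" using disjointD[OF partition_onD2[OF assms(1)], of C B] assms by blast
qed

lemma block_of_in:
  assumes "partition_on A \<sigma>" "i \<in> A"
  shows "block_of \<sigma> i \<in> \<sigma>" "i \<in> block_of \<sigma> i"
proof -
  obtain B where "B \<in> \<sigma>" "i \<in> B" using partition_onD1[OF assms(1)] assms(2) by blast
  then show "block_of \<sigma> i \<in> \<sigma>" "i \<in> block_of \<sigma> i" using block_of_eq[OF assms(1)] by auto
qed

definition gB :: "nat set set \<Rightarrow> nat set \<Rightarrow> nat" where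
  "gB \<sigma> B = card {C \<in> \<sigma>. Min C \<le> Min B}"

lemma part_fin:
  fixes \<sigma> :: "nat set set"
  assumes "partition_on {1..n} \<sigma>"
  shows "finite \<sigma>" "\<And>B. B \<in> \<sigma> \<Longrightarrow> finite B \<and> B \<noteq> {} \<and> B \<subseteq> {1..n}"
proof -
  show "finite \<sigma>" using finite_elements[OF finite_atLeastAtMost assms] .
  fix B assume "B \<in> \<sigma>"
  then show "finite B \<and> B \<noteq> {} \<and> B \<subseteq> {1..n}"
    using partition_onD1[OF assms] partition_onD3[OF assms] finite_subset[of B "{1..n}"] by blast
qed

lemma Min_inj:
  fixes \<sigma> :: "nat set set"
  assumes "partition_on {1..n} \<sigma>" "B \<in> \<sigma>" "C \<in> \<sigma>" "Min B = Min C"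
  shows "B = C"
proof -
  have "Min B \<in> B" "Min C \<in> C" using part_fin(2)[OF assms(1)] assms(2,3) by auto
  then show ?thesis using disjointD[OF partition_onD2[OF assms(1)], of B C] assms by auto
qed

lemma gB_less:
  assumes "partition_on {1..n} \<sigma>" "B \<in> \<sigma>" "C \<in> \<sigma>" "Min B < Min C"
  shows "gB \<sigma> B < gB \<sigma> C"
proof -
  have "C \<in> {D \<in> \<sigma>. Min D \<le> Min C}" "C \<notin> {D \<in> \<sigma>. Min D \<le> Min B}"
    using assms by auto
  moreover have "{D \<in> \<sigma>. Min D \<le> Min B} \<subseteq> {D \<in> \<sigma>. Min D \<le> Min C}"
    using assms by auto
  ultimately have "{D \<in> \<sigma>. Min D \<le> Min B} \<subset> {D \<in> \<sigma>. Min D \<le> Min C}"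
    by blast
  then show ?thesis unfolding gB_def using part_fin(1)[OF assms(1)]
    by (simp add: psubset_card_mono)
qed

lemma gB_inj:
  assumes "partition_on {1..n} \<sigma>" "B \<in> \<sigma>" "C \<in> \<sigma>" "gB \<sigma> B = gB \<sigma> C"
  shows "B = C"
proof (rule ccontr)
  assume "B \<noteq> C"
  then have "Min B \<noteq> Min C" using Min_inj[OF assms(1-3)] by blast
  then show False using gB_less[OF assms(1) assms(2,3)] gB_less[OF assms(1) assms(3,2)] assms(4)
    by (cases "Min B < Min C") auto
qed

lemma rgf_Pi:
  assumes "\<sigma> \<in> Pi_set n"
  shows "rgf \<sigma> = map (\<lambda>i. gB \<sigma> (block_of \<sigma> i)) [1..<Suc n]"
proof -
  have "\<Union>\<sigma> = {1..n}" using assms partition_onD1 unfolding Pi_set_def by blast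
  moreover have "{1..n} = {1..<Suc n}" by auto
  ultimately show ?thesis unfolding rgf_def gB_def by simp
qed

lemma rgf_length: "\<sigma> \<in> Pi_set n \<Longrightarrow> length (rgf \<sigma>) = n"
  by (simp add: rgf_Pi)

lemma rgf_nth: "\<sigma> \<in> Pi_set n \<Longrightarrow> i < n \<Longrightarrow> rgf \<sigma> ! i = gB \<sigma> (block_of \<sigma> (Suc i))"
  by (simp add: rgf_Pi del: upt_Suc)

lemma block_of_char:
  assumes "\<sigma> \<in> Pi_set n" "i \<in> {1..n}"
  shows "block_of \<sigma> i = {j \<in> {1..n}. rgf \<sigma> ! (j - 1) = rgf \<sigma> ! (i - 1)}"
proof -
  have P: "partition_on {1..n} \<sigma>" using assms unfolding Pi_set_def by simp
  have E: "rgf \<sigma> ! (j - 1) = gB \<sigma> (block_of \<sigma> j)" if "j \<in> {1..n}" for j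
  proof -
    have "j - 1 < n" "Suc (j - 1) = j" using that by auto
    then show ?thesis using rgf_nth[OF assms(1), of "j - 1"] by simp
  qed
  show ?thesis
  proof (intro set_eqI iffI)
    fix j assume j: "j \<in> block_of \<sigma> i"
    have jn: "j \<in> {1..n}" using j part_fin(2)[OF P block_of_in(1)[OF P assms(2)]] by blast
    have "block_of \<sigma> j = block_of \<sigma> i" using block_of_eq[OF P block_of_in(1)[OF P assms(2)] j] .
    then show "j \<in> {j \<in> {1..n}. rgf \<sigma> ! (j - 1) = rgf \<sigma> ! (i - 1)}" using E[OF jn] E[OF assms(2)] jn by simp
  next
    fix j assume "j \<in> {j \<in> {1..n}. rgf \<sigma> ! (j - 1) = rgf \<sigma> ! (i - 1)}"
    then have jn: "j \<in> {1..n}" and "gB \<sigma> (block_of \<sigma> j) = gB \<sigma> (block_of \<sigma> i)"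
      using E[of j] E[OF assms(2)] by auto
    then have "block_of \<sigma> j = block_of \<sigma> i"
      using gB_inj[OF P block_of_in(1)[OF P jn] block_of_in(1)[OF P assms(2)]] by blast
    then show "j \<in> block_of \<sigma> i" using block_of_in(2)[OF P jn] by simp
  qed
qed

lemma part_image_block:
  assumes "partition_on A \<sigma>"
  shows "\<sigma> = block_of \<sigma> ` A"
proof (intro set_eqI iffI)
  fix B assume B: "B \<in> \<sigma>"
  then obtain i where "i \<in> B" using partition_onD3[OF assms] by (metis all_not_in_conv)
  moreover have "i \<in> A" using partition_onD1[OF assms] B \<open>i \<in> B\<close> by blast
  ultimately show "B \<in> block_of \<sigma> ` A" using block_of_eq[OF assms B] by force
next
  fix B assume "B \<in> block_of \<sigma> ` A"
  then show "B \<in> \<sigma>" using block_of_in(1)[OF assms] by blast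
qed

lemma rgf_inj: "inj_on rgf (Pi_set n)"
proof (rule inj_onI)
  fix \<sigma> \<tau> assume s: "\<sigma> \<in> Pi_set n" and t: "\<tau> \<in> Pi_set n" and e: "rgf \<sigma> = rgf \<tau>"
  have "\<sigma> = block_of \<sigma> ` {1..n}" using part_image_block s unfolding Pi_set_def by blast
  also have "\<dots> = (\<lambda>i. {j \<in> {1..n}. rgf \<sigma> ! (j - 1) = rgf \<sigma> ! (i - 1)}) ` {1..n}"
    using block_of_char[OF s] by simp
  also have "\<dots> = (\<lambda>i. {j \<in> {1..n}. rgf \<tau> ! (j - 1) = rgf \<tau> ! (i - 1)}) ` {1..n}"
    using e by simp
  also have "\<dots> = block_of \<tau> ` {1..n}"
    using block_of_char[OF t] by simp
  also have "\<dots> = \<tau>" using part_image_block t unfolding Pi_set_def by blast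
  finally show "\<sigma> = \<tau>" .
qed

lemma gB_rank:
  assumes P: "partition_on {1..n} \<sigma>" and B: "B \<in> \<sigma>"
  shows "gB \<sigma> B = card {x \<in> Min ` \<sigma>. x \<le> Min B}"
proof -
  have "{x \<in> Min ` \<sigma>. x \<le> Min B} = Min ` {C \<in> \<sigma>. Min C \<le> Min B}" by auto
  moreover have "inj_on Min {C \<in> \<sigma>. Min C \<le> Min B}"
    by (rule inj_onI) (use Min_inj[OF P] in auto)
  ultimately show ?thesis unfolding gB_def by (simp add: card_image)
qed

lemma rgf_rgfw:
  assumes s: "\<sigma> \<in> Pi_set n"
  shows "rgfw (rgf \<sigma>)"
  unfolding rgfw_def
proof (intro allI impI)
  fix i assume "i < length (rgf \<sigma>)"
  then have i: "i < n" using rgf_length[OF s] by simp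
  have P: "partition_on {1..n} \<sigma>" using s unfolding Pi_set_def by simp
  have fs: "finite \<sigma>" using part_fin(1)[OF P] .
  define M where "M = Min ` \<sigma>"
  have fM: "finite M" using fs unfolding M_def by simp
  define Bi where "Bi = block_of \<sigma> (Suc i)"
  have Si: "Suc i \<in> {1..n}" using i by simp
  have Bi: "Bi \<in> \<sigma>" "Suc i \<in> Bi" using block_of_in[OF P Si] unfolding Bi_def by auto
  have Bfin: "finite Bi" "Bi \<noteq> {}" using part_fin(2)[OF P Bi(1)] by auto
  define m where "m = Min Bi"
  have mle: "m \<le> Suc i" unfolding m_def using Bi Bfin by simp
  have v: "rgf \<sigma> ! i = card {x \<in> M. x \<le> m}"
    using rgf_nth[OF s i] gB_rank[OF P Bi(1)] unfolding M_def m_def Bi_def by simp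
  have "m \<in> {x \<in> M. x \<le> m}" unfolding M_def m_def using Bi by auto
  moreover have "finite {x \<in> M. x \<le> m}" using fM by simp
  ultimately have "0 < card {x \<in> M. x \<le> m}" by (subst card_gt_0_iff) blast
  then have pos: "0 < rgf \<sigma> ! i" using v by simp
  define K where "K = {x \<in> M. x \<le> i}"
  have fK: "finite K" using fM unfolding K_def by simp
  have "{x \<in> M. x \<le> m} \<subseteq> insert (Suc i) K" using mle unfolding K_def by auto
  then have "card {x \<in> M. x \<le> m} \<le> card (insert (Suc i) K)" using fK by (simp add: card_mono)
  also have "\<dots> \<le> Suc (card K)" using fK by (simp add: card_insert_if)
  finally have v1: "rgf \<sigma> ! i \<le> Suc (card K)" using v by simp
  have "card K \<le> mx (take i (rgf \<sigma>))"
  proof (cases "K = {}")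
    case True then show ?thesis by simp
  next
    case False
    define x0 where "x0 = Max K"
    have x0K: "x0 \<in> K" using False fK unfolding x0_def by simp
    then obtain C where C: "C \<in> \<sigma>" "x0 = Min C" unfolding K_def M_def by auto
    have Cfin: "finite C" "C \<noteq> {}" "C \<subseteq> {1..n}" using part_fin(2)[OF P C(1)] by auto
    have x0C: "x0 \<in> C" using C Cfin by simp
    have x0n: "x0 \<in> {1..n}" using x0C Cfin by auto
    have x0i: "x0 \<le> i" using x0K unfolding K_def by simp
    have bC: "block_of \<sigma> x0 = C" using block_of_eq[OF P C(1) x0C] .
    have "{x \<in> M. x \<le> x0} = K"
    proof
      show "{x \<in> M. x \<le> x0} \<subseteq> K" using x0i unfolding K_def by auto
      show "K \<subseteq> {x \<in> M. x \<le> x0}" using fK unfolding x0_def K_def by auto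
    qed
    moreover have "x0 - 1 < n" "Suc (x0 - 1) = x0" using x0n by auto
    ultimately have r: "rgf \<sigma> ! (x0 - 1) = card K"
      using rgf_nth[OF s, of "x0 - 1"] gB_rank[OF P C(1)] bC C(2) unfolding M_def by simp
    have "x0 - 1 < i" using x0i x0n by (simp, arith)
    moreover have "length (take i (rgf \<sigma>)) = i" using i rgf_length[OF s] by simp
    ultimately have "take i (rgf \<sigma>) ! (x0 - 1) \<in> set (take i (rgf \<sigma>))" by (metis nth_mem)
    then have "rgf \<sigma> ! (x0 - 1) \<in> set (take i (rgf \<sigma>))" using \<open>x0 - 1 < i\<close> by simp
    then show ?thesis using r mx_ge by metis
  qed
  then show "0 < rgf \<sigma> ! i \<and> rgf \<sigma> ! i \<le> Suc (mx (take i (rgf \<sigma>)))" using pos v1 by simp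
qed

lemma rgf_RG: "\<sigma> \<in> Pi_set n \<Longrightarrow> rgf \<sigma> \<in> RG n"
  using rgf_rgfw rgf_length unfolding RG_def by blast

lemma rgf_surj:
  assumes "w \<in> RG n"
  shows "\<exists>\<sigma>\<in>Pi_set n. rgf \<sigma> = w"
proof -
  have L: "length w = n" and R: "rgfw w" using assms unfolding RG_def by auto
  define blk where "blk v = {i\<in>{1..n}. w!(i-1) = v}" for v
  define \<sigma> where "\<sigma> = blk ` set w"
  have posof: "\<exists>i\<in>{1..n}. w!(i-1) = v" if vw: "v \<in> set w" for v
  proof -
    obtain j where "j < n" "w!j = v" using vw L by (auto simp: in_set_conv_nth)
    then show ?thesis by (intro bexI[of _ "Suc j"]) auto
  qed
  have blkne: "blk v \<noteq> {}" if "v \<in> set w" for v using posof[OF that] unfolding blk_def by blast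
  have blkfin: "finite (blk v)" for v unfolding blk_def by simp
  have inblk: "i \<in> blk (w!(i-1))" "w!(i-1) \<in> set w" if "i \<in> {1..n}" for i
    using that L unfolding blk_def by auto
  have P: "partition_on {1..n} \<sigma>"
  proof (rule partition_onI)
    show "\<Union>\<sigma> = {1..n}"
    proof
      show "\<Union>\<sigma> \<subseteq> {1..n}" unfolding \<sigma>_def blk_def by auto
      show "{1..n} \<subseteq> \<Union>\<sigma>" unfolding \<sigma>_def using inblk by blast
    qed
  next
    fix p q assume "p \<in> \<sigma>" "q \<in> \<sigma>" "p \<noteq> q"
    then show "disjnt p q" unfolding \<sigma>_def blk_def disjnt_def by auto
  next
    show "{} \<notin> \<sigma>" unfolding \<sigma>_def using blkne by auto
  qed
  have inj: "inj_on blk (set w)"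
  proof (rule inj_onI)
    fix u v assume "u \<in> set w" "v \<in> set w" "blk u = blk v"
    then obtain i where "i \<in> {1..n}" "w!(i-1) = u" using posof by blast
    then have "i \<in> blk v" using \<open>blk u = blk v\<close> unfolding blk_def by auto
    then show "u = v" using \<open>w!(i-1) = u\<close> unfolding blk_def by auto
  qed
  have mono: "Min (blk u) < Min (blk v)" if u: "u \<in> set w" and v: "v \<in> set w" and uv: "u < v" for u v
  proof -
    define p where "p = Min (blk v)"
    have "p \<in> blk v" unfolding p_def using blkne[OF v] blkfin by simp
    then have p: "p \<in> {1..n}" "w!(p-1) = v" unfolding blk_def by auto
    have "p - 1 < length w" using p L by auto
    moreover have "1 \<le> u" using rgfw_pos[OF R u] by simp
    ultimately obtain q where q: "q < p - 1" "w!q = u" using rgfw_before[OF R] uv p(2) by blast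
    then have "Suc q \<in> blk u" unfolding blk_def using p by auto
    then have "Min (blk u) \<le> Suc q" using blkfin by simp
    then show ?thesis using q unfolding p_def by simp
  qed
  have cmp: "(Min (blk u) \<le> Min (blk v)) = (u \<le> v)" if "u \<in> set w" "v \<in> set w" for u v
    using mono[OF that] mono[OF that(2,1)] by (cases u v rule: linorder_cases) auto
  have gBv: "gB \<sigma> (blk v) = v" if v: "v \<in> set w" for v
  proof -
    have "{C \<in> \<sigma>. Min C \<le> Min (blk v)} = blk ` {u \<in> set w. Min (blk u) \<le> Min (blk v)}"
      unfolding \<sigma>_def by auto
    also have "{u \<in> set w. Min (blk u) \<le> Min (blk v)} = {u \<in> set w. u \<le> v}"
      using cmp[OF _ v] by auto
    also have "{u \<in> set w. u \<le> v} = {1..v}"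
      using rgfw_set[OF R] mx_ge[OF v] by auto
    finally have "{C \<in> \<sigma>. Min C \<le> Min (blk v)} = blk ` {1..v}" .
    moreover have "inj_on blk {1..v}"
      using inj rgfw_set[OF R] mx_ge[OF v] by (auto intro: inj_on_subset)
    ultimately show ?thesis unfolding gB_def by (simp add: card_image)
  qed
  have s: "\<sigma> \<in> Pi_set n" using P unfolding Pi_set_def by simp
  have "rgf \<sigma> = w"
  proof (rule nth_equalityI)
    show "length (rgf \<sigma>) = length w" using rgf_length[OF s] L by simp
  next
    fix i assume "i < length (rgf \<sigma>)"
    then have i: "i < n" using rgf_length[OF s] by simp
    then have Si: "Suc i \<in> {1..n}" by simp
    have "blk (w!i) \<in> \<sigma>" unfolding \<sigma>_def using inblk(2)[OF Si] by simp
    then have "block_of \<sigma> (Suc i) = blk (w!i)" using block_of_eq[OF P _ inblk(1)[OF Si]] by simp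
    then show "rgf \<sigma> ! i = w ! i" using rgf_nth[OF s i] gBv inblk(2)[OF Si] by simp
  qed
  then show ?thesis using s by blast
qed

lemma contains_subseq: "contains w p \<longleftrightarrow> (\<exists>s. subseq s w \<and> standardize s = p)"
  unfolding contains_def subseq_conv_nths by metis

lemma std_length[simp]: "length (standardize s) = length s"
  by (simp add: standardize_def)

lemma subseq_nthE:
  assumes "subseq (x#s) w"
  shows "\<exists>i<length w. w!i = x \<and> subseq s (drop (Suc i) w)"
proof -
  obtain us v vs where "w = us @ v # vs" "x = v" "subseq s vs" using list_emb_ConsD[OF assms] by blast
  then show ?thesis by (intro exI[of _ "length us"]) auto
qed

lemma subseq_nthI:
  assumes "i < length w" "subseq s (drop (Suc i) w)"
  shows "subseq (w!i # s) w"
proof -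
  have "w = take i w @ (w!i # drop (Suc i) w)" using id_take_nth_drop[OF assms(1)] .
  moreover have "subseq (w!i # s) (w!i # drop (Suc i) w)" using assms(2) by simp
  ultimately show ?thesis by (metis subseq_drop_many)
qed

lemma contains3:
  assumes "length p = 3"
  shows "contains w p \<longleftrightarrow> (\<exists>i j k. i<j \<and> j<k \<and> k<length w \<and> standardize [w!i,w!j,w!k] = p)"
proof
  assume "contains w p"
  then obtain s where s: "subseq s w" "standardize s = p" using contains_subseq by blast
  then have "length s = 3" using assms std_length by metis
  then obtain a b c where abc: "s = [a,b,c]"
  proof -
    obtain a t where "s = a # t" using \<open>length s = 3\<close> by (cases s) auto
    moreover obtain b u where "t = b # u" using \<open>length s = 3\<close> calculation by (cases t) auto
    moreover obtain c where "u = [c]" using \<open>length s = 3\<close> calculation by (cases u) auto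
    ultimately show ?thesis using that by blast
  qed
  obtain i where i: "i < length w" "w!i = a" "subseq [b,c] (drop (Suc i) w)"
    using subseq_nthE[of a "[b,c]" w] s(1) abc by blast
  obtain j' where j': "j' < length (drop (Suc i) w)" "drop (Suc i) w ! j' = b"
      "subseq [c] (drop (Suc j') (drop (Suc i) w))"
    using subseq_nthE[OF i(3)] by blast
  obtain k' where k': "k' < length (drop (Suc j') (drop (Suc i) w))" "drop (Suc j') (drop (Suc i) w) ! k' = c"
    using subseq_nthE[OF j'(3)] by blast
  define j where "j = Suc i + j'"
  define k where "k = Suc j + k'"
  have "i < j" "j < k" "k < length w" using j' k' unfolding j_def k_def by auto
  moreover have "w!j = b" "w!k = c" using j' k' unfolding j_def k_def by (auto simp: add.commute add.left_commute)
  ultimately show "\<exists>i j k. i<j \<and> j<k \<and> k<length w \<and> standardize [w!i,w!j,w!k] = p"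
    using s(2) abc i(2) by blast
next
  assume "\<exists>i j k. i<j \<and> j<k \<and> k<length w \<and> standardize [w!i,w!j,w!k] = p"
  then obtain i j k where ijk: "i<j" "j<k" "k<length w" "standardize [w!i,w!j,w!k] = p" by blast
  have "k - Suc j < length (drop (Suc j) w)" "drop (Suc j) w ! (k - Suc j) = w!k" using ijk by auto
  then have "w!k \<in> set (drop (Suc j) w)" by (metis nth_mem)
  then have "subseq [w!k] (drop (Suc j) w)" by (simp add: subseq_singleton_left)
  then have "subseq [w!j, w!k] (drop (Suc i) w)"
  proof -
    assume H: "subseq [w!k] (drop (Suc j) w)"
    have "j - Suc i < length (drop (Suc i) w)" using ijk by simp
    moreover have "drop (Suc i) w ! (j - Suc i) = w!j" using ijk by simp
    moreover have "drop (Suc (j - Suc i)) (drop (Suc i) w) = drop (Suc j) w" using ijk by simp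
    ultimately show ?thesis using subseq_nthI[of "j - Suc i" "drop (Suc i) w" "[w!k]"] H by simp
  qed
  then have "subseq [w!i, w!j, w!k] w" using subseq_nthI[of i w] ijk by simp
  then show "contains w p" using ijk(4) contains_subseq by blast
qed

lemma Collect_insert_conj: "{t \<in> insert a A. P t} = (if P a then insert a {t\<in>A. P t} else {t\<in>A. P t})"
  by auto

lemma std3: "standardize [x,y,z] = [card {t\<in>{x,y,z}. t \<le> x}, card {t\<in>{x,y,z}. t \<le> y}, card {t\<in>{x,y,z}. t \<le> z}]"
  by (simp add: standardize_def)

lemma std112: "standardize [x,y,z::nat] = [1,1,2] \<longleftrightarrow> x = y \<and> y < z"
  unfolding std3 Collect_insert_conj
  by (cases x y rule: linorder_cases; cases y z rule: linorder_cases; cases x z rule: linorder_cases)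
     (simp_all add: Collect_insert_conj card_insert_if)

lemma std121: "standardize [x,y,z::nat] = [1,2,1] \<longleftrightarrow> x = z \<and> x < y"
  unfolding std3 Collect_insert_conj
  by (cases x y rule: linorder_cases; cases y z rule: linorder_cases; cases x z rule: linorder_cases)
     (simp_all add: Collect_insert_conj card_insert_if)

lemma std122: "standardize [x,y,z::nat] = [1,2,2] \<longleftrightarrow> y = z \<and> x < y"
  unfolding std3 Collect_insert_conj
  by (cases x y rule: linorder_cases; cases y z rule: linorder_cases; cases x z rule: linorder_cases)
     (simp_all add: Collect_insert_conj card_insert_if)

definition tri :: "(nat \<Rightarrow> nat \<Rightarrow> nat \<Rightarrow> bool) \<Rightarrow> nat list \<Rightarrow> bool" where
  "tri P w \<longleftrightarrow> (\<exists>i j k. i<j \<and> j<k \<and> k<length w \<and> P (w!i) (w!j) (w!k))"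

lemma contains_112: "contains w [1,1,2] \<longleftrightarrow> tri (\<lambda>x y z. x = y \<and> y < z) w"
proof -
  have L: "length [1,1,2::nat] = 3" by simp
  show ?thesis unfolding contains3[OF L] std112 tri_def by (rule refl)
qed
lemma contains_121: "contains w [1,2,1] \<longleftrightarrow> tri (\<lambda>x y z. x = z \<and> x < y) w"
proof -
  have L: "length [1,2,1::nat] = 3" by simp
  show ?thesis unfolding contains3[OF L] std121 tri_def by (rule refl)
qed
lemma contains_122: "contains w [1,2,2] \<longleftrightarrow> tri (\<lambda>x y z. y = z \<and> x < y) w"
proof -
  have L: "length [1,2,2::nat] = 3" by simp
  show ?thesis unfolding contains3[OF L] std122 tri_def by (rule refl)
qed

lemma tri_snoc: "tri P (u@[x]) \<longleftrightarrow> tri P u \<or> (\<exists>i j. i<j \<and> j<length u \<and> P (u!i) (u!j) x)"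
proof
  assume "tri P (u@[x])"
  then obtain i j k where ijk: "i<j" "j<k" "k<Suc (length u)" "P ((u@[x])!i) ((u@[x])!j) ((u@[x])!k)"
    unfolding tri_def by auto
  show "tri P u \<or> (\<exists>i j. i<j \<and> j<length u \<and> P (u!i) (u!j) x)"
  proof (cases "k < length u")
    case True
    then have "P (u!i) (u!j) (u!k)" using ijk by (simp add: nth_append)
    then show ?thesis using ijk True unfolding tri_def by blast
  next
    case False
    then have "k = length u" using ijk by simp
    then have "P (u!i) (u!j) x" using ijk by (simp add: nth_append)
    then show ?thesis using ijk \<open>k = length u\<close> by blast
  qed
next
  assume "tri P u \<or> (\<exists>i j. i<j \<and> j<length u \<and> P (u!i) (u!j) x)"
  then show "tri P (u@[x])"
  proof
    assume "tri P u"
    then obtain i j k where "i<j" "j<k" "k<length u" "P (u!i) (u!j) (u!k)" unfolding tri_def by blast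
    then show ?thesis unfolding tri_def
      by (intro exI[of _ i] exI[of _ j] exI[of _ k]) (simp add: nth_append)
  next
    assume "\<exists>i j. i<j \<and> j<length u \<and> P (u!i) (u!j) x"
    then obtain i j where "i<j" "j<length u" "P (u!i) (u!j) x" by blast
    then show ?thesis unfolding tri_def
      by (intro exI[of _ i] exI[of _ j] exI[of _ "length u"]) (simp add: nth_append)
  qed
qed

lemma tri_Cons: "tri P (x#v) \<longleftrightarrow> tri P v \<or> (\<exists>j k. j<k \<and> k<length v \<and> P x (v!j) (v!k))"
proof
  assume "tri P (x#v)"
  then obtain i j k where ijk: "i<j" "j<k" "k<Suc (length v)" "P ((x#v)!i) ((x#v)!j) ((x#v)!k)"
    unfolding tri_def by auto
  obtain j' where j': "j = Suc j'" using ijk by (cases j) auto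
  obtain k' where k': "k = Suc k'" using ijk by (cases k) auto
  show "tri P v \<or> (\<exists>j k. j<k \<and> k<length v \<and> P x (v!j) (v!k))"
  proof (cases i)
    case 0
    then have "P x (v!j') (v!k')" using ijk j' k' by simp
    then show ?thesis using ijk j' k' by auto
  next
    case (Suc i')
    then have "P (v!i') (v!j') (v!k')" using ijk j' k' by simp
    then show ?thesis using ijk j' k' Suc unfolding tri_def by auto
  qed
next
  assume "tri P v \<or> (\<exists>j k. j<k \<and> k<length v \<and> P x (v!j) (v!k))"
  then show "tri P (x#v)"
  proof
    assume "tri P v"
    then obtain i j k where "i<j" "j<k" "k<length v" "P (v!i) (v!j) (v!k)" unfolding tri_def by blast
    then show ?thesis unfolding tri_def
      by (intro exI[of _ "Suc i"] exI[of _ "Suc j"] exI[of _ "Suc k"]) simp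
  next
    assume "\<exists>j k. j<k \<and> k<length v \<and> P x (v!j) (v!k)"
    then obtain j k where "j<k" "k<length v" "P x (v!j) (v!k)" by blast
    then show ?thesis unfolding tri_def
      by (intro exI[of _ 0] exI[of _ "Suc j"] exI[of _ "Suc k"]) simp
  qed
qed

lemma tri_map: "tri P (map f u) \<longleftrightarrow> tri (\<lambda>a b c. P (f a) (f b) (f c)) u"
proof
  assume "tri P (map f u)"
  then obtain i j k where "i<j" "j<k" "k<length u" "P (map f u!i) (map f u!j) (map f u!k)"
    unfolding tri_def by auto
  then show "tri (\<lambda>a b c. P (f a) (f b) (f c)) u" unfolding tri_def
    by (intro exI[of _ i] exI[of _ j] exI[of _ k]) simp
next
  assume "tri (\<lambda>a b c. P (f a) (f b) (f c)) u"
  then obtain i j k where "i<j" "j<k" "k<length u" "P (f (u!i)) (f (u!j)) (f (u!k))"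
    unfolding tri_def by auto
  then show "tri P (map f u)" unfolding tri_def
    by (intro exI[of _ i] exI[of _ j] exI[of _ k]) simp
qed

lemma tri_take: "tri P (take m w) \<Longrightarrow> tri P w"
proof -
  assume "tri P (take m w)"
  then obtain i j k where "i<j" "j<k" "k<m" "k < length w" "P (take m w!i) (take m w!j) (take m w!k)"
    unfolding tri_def by auto
  then show "tri P w" unfolding tri_def
    by (intro exI[of _ i] exI[of _ j] exI[of _ k]) simp
qed

lemma card_double:
  assumes "finite A" "inj_on f A" "inj_on g A" "f`A \<inter> g`A = {}" "B = f`A \<union> g`A"
  shows "card B = 2 * card A"
proof -
  have "card B = card (f`A) + card (g`A)" using assms(1,4,5) by (simp add: card_Un_disjoint)
  also have "\<dots> = card A + card A" using assms(2,3) by (simp add: card_image)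
  finally show ?thesis by simp
qed

definition Av :: "nat list \<Rightarrow> nat \<Rightarrow> nat list set" where
  "Av p n = {w \<in> RG n. \<not> contains w p}"

lemma finite_Av: "finite (Av p n)"
proof (rule finite_subset[OF _ finite_RG])
  show "Av p n \<subseteq> RG n" unfolding Av_def by blast
qed

lemma RG_snoc: "u@[x] \<in> RG (Suc n) \<longleftrightarrow> u \<in> RG n \<and> 0 < x \<and> x \<le> Suc (mx u)"
  unfolding RG_def mem_Collect_eq rgfw_snoc by auto

lemma RG_Suc_split: "w \<in> RG (Suc n) \<Longrightarrow> \<exists>u x. w = u@[x]"
proof -
  assume "w \<in> RG (Suc n)"
  then have "length w = Suc n" unfolding RG_def by simp
  then show ?thesis using length_Suc_conv_rev[of w n] by blast
qed

lemma RG_mx_pos: "u \<in> RG (Suc n) \<Longrightarrow> 0 < mx u"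
proof -
  assume "u \<in> RG (Suc n)"
  then have "u \<noteq> []" "rgfw u" unfolding RG_def by auto
  then show ?thesis using mx_in rgfw_pos by blast
qed

lemma rgfw_hd: "rgfw w \<Longrightarrow> w \<noteq> [] \<Longrightarrow> w!0 = 1"
proof -
  assume R: "rgfw w" and ne: "w \<noteq> []"
  have "0 < w!0 \<and> w!0 \<le> Suc (mx (take 0 w))" using R[unfolded rgfw_def, rule_format, of 0] ne by simp
  then show ?thesis by simp
qed

lemma RG_pos: "w \<in> RG n \<Longrightarrow> x \<in> set w \<Longrightarrow> 0 < x"
  unfolding RG_def using rgfw_pos by blast

lemma sorted_mx: "sorted u \<Longrightarrow> u \<noteq> [] \<Longrightarrow> mx u = last u"
proof -
  assume s: "sorted u" and ne: "u \<noteq> []"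
  have u: "u = butlast u @ [last u]" using ne by simp
  have "\<forall>x\<in>set u. x \<le> last u"
  proof
    fix x assume "x \<in> set u"
    then have "x \<in> set (butlast u) \<or> x = last u" using u by (metis rotate1.simps(2) rotate1_is_Nil_conv set_ConsD set_rotate1 ne)
    moreover have "\<forall>y\<in>set (butlast u). y \<le> last u" using s u sorted_append[of "butlast u" "[last u]"] by simp
    ultimately show "x \<le> last u" by auto
  qed
  then have "mx u \<le> last u" by (rule mx_le)
  moreover have "last u \<le> mx u" using mx_ge ne by simp
  ultimately show ?thesis by simp
qed

lemma av121: "w \<in> RG n \<Longrightarrow> \<not> contains w [1,2,1] \<longleftrightarrow> sorted w"
proof -
  assume wR: "w \<in> RG n"
  then have R: "rgfw w" unfolding RG_def by simp
  show ?thesis unfolding contains_121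
  proof
    assume nt: "\<not> tri (\<lambda>x y z. x = z \<and> x < y) w"
    show "sorted w"
    proof (rule ccontr)
      assume "\<not> sorted w"
      then obtain j where j: "Suc j < length w" "\<not> w!j \<le> w!Suc j" unfolding sorted_iff_nth_Suc by blast
      have "0 < w!Suc j" using RG_pos[OF wR] j(1) by simp
      then obtain q where q: "q < j" "w!q = w!Suc j" using rgfw_before[OF R, of j "w!Suc j"] j by auto
      have "tri (\<lambda>x y z. x = z \<and> x < y) w" unfolding tri_def
        using q j by (intro exI[of _ q] exI[of _ j] exI[of _ "Suc j"]) simp
      then show False using nt by simp
    qed
  next
    assume s: "sorted w"
    show "\<not> tri (\<lambda>x y z. x = z \<and> x < y) w"
    proof
      assume "tri (\<lambda>x y z. x = z \<and> x < y) w"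
      then obtain i j k where "i<j" "j<k" "k<length w" "w!i = w!k" "w!i < w!j" unfolding tri_def by blast
      moreover have "w!j \<le> w!k" using sorted_nth_mono[OF s, of j k] calculation by simp
      ultimately show False by simp
    qed
  qed
qed

lemma double121: "card {w \<in> RG (Suc (Suc n)). sorted w} = 2 * card {w \<in> RG (Suc n). sorted w}"
proof (rule card_double)
  let ?A = "{w \<in> RG (Suc n). sorted w}"
  let ?f = "\<lambda>u. u @ [last u]"
  let ?g = "\<lambda>u. u @ [Suc (last u)]"
  show "finite ?A" using finite_RG by simp
  show "inj_on ?f ?A" by (rule inj_onI) simp
  show "inj_on ?g ?A" by (rule inj_onI) simp
  show "?f ` ?A \<inter> ?g ` ?A = {}" by auto
  show "{w \<in> RG (Suc (Suc n)). sorted w} = ?f ` ?A \<union> ?g ` ?A"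
  proof (intro set_eqI iffI)
    fix w assume "w \<in> {w \<in> RG (Suc (Suc n)). sorted w}"
    then have w: "w \<in> RG (Suc (Suc n))" "sorted w" by auto
    obtain u x where ux: "w = u @ [x]" using RG_Suc_split[OF w(1)] by blast
    have u: "u \<in> RG (Suc n)" "0 < x" "x \<le> Suc (mx u)" using w(1) ux RG_snoc by auto
    have ne: "u \<noteq> []" using u(1) unfolding RG_def by auto
    have su: "sorted u" "\<forall>y\<in>set u. y \<le> x" using w(2) ux sorted_append[of u "[x]"] by auto
    have "last u \<le> x" using su(2) ne by simp
    moreover have "mx u = last u" using sorted_mx[OF su(1) ne] .
    ultimately have "x = last u \<or> x = Suc (last u)" using u(3) by auto
    then show "w \<in> ?f ` ?A \<union> ?g ` ?A" using ux u(1) su(1) by auto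
  next
    fix w assume "w \<in> ?f ` ?A \<union> ?g ` ?A"
    then obtain u x where ux: "w = u @ [x]" "u \<in> ?A" "x = last u \<or> x = Suc (last u)" by auto
    have ne: "u \<noteq> []" using ux(2) unfolding RG_def by auto
    have mxu: "mx u = last u" using sorted_mx[OF _ ne] ux(2) by simp
    have "0 < last u" using RG_pos[of u] ux(2) ne by auto
    then have "w \<in> RG (Suc (Suc n))" using ux RG_snoc mxu by auto
    moreover have "sorted w"
    proof -
      have "\<forall>y\<in>set u. y \<le> mx u" using mx_ge by blast
      then show ?thesis using ux mxu sorted_append[of u "[x]"] by auto
    qed
    ultimately show "w \<in> {w \<in> RG (Suc (Suc n)). sorted w}" by simp
  qed
qed

lemma Av121: "Av [1,2,1] n = {w \<in> RG n. sorted w}"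
  unfolding Av_def using av121 by blast

lemma double_Av121: "card (Av [1,2,1] (Suc (Suc n))) = 2 * card (Av [1,2,1] (Suc n))"
  unfolding Av121 by (rule double121)

definition Q122 :: "nat list \<Rightarrow> bool" where
  "Q122 w \<longleftrightarrow> (\<forall>i j. i<j \<and> j<length w \<and> w!i = w!j \<longrightarrow> w!i = 1)"

lemma av122: "w \<in> RG n \<Longrightarrow> \<not> contains w [1,2,2] \<longleftrightarrow> Q122 w"
proof -
  assume wR: "w \<in> RG n"
  then have R: "rgfw w" unfolding RG_def by simp
  show ?thesis unfolding contains_122
  proof
    assume nt: "\<not> tri (\<lambda>x y z. y = z \<and> x < y) w"
    show "Q122 w" unfolding Q122_def
    proof (intro allI impI)
      fix i j assume ij: "i < j \<and> j < length w \<and> w!i = w!j"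
      show "w!i = 1"
      proof (rule ccontr)
        assume "w!i \<noteq> 1"
        moreover have "0 < w!i" using RG_pos[OF wR] ij by simp
        ultimately have "1 < w!i" by simp
        then obtain q where q: "q < i" "w!q = 1" using rgfw_before[OF R, of i 1] ij by auto
        have "tri (\<lambda>x y z. y = z \<and> x < y) w" unfolding tri_def
          using q ij \<open>1 < w!i\<close> by (intro exI[of _ q] exI[of _ i] exI[of _ j]) simp
        then show False using nt by simp
      qed
    qed
  next
    assume Q: "Q122 w"
    show "\<not> tri (\<lambda>x y z. y = z \<and> x < y) w"
    proof
      assume "tri (\<lambda>x y z. y = z \<and> x < y) w"
      then obtain i j k where ijk: "i<j" "j<k" "k<length w" "w!j = w!k" "w!i < w!j" unfolding tri_def by blast
      then have "w!j = 1" using Q unfolding Q122_def by blast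
      moreover have "0 < w!i" using RG_pos[OF wR] ijk by simp
      ultimately show False using ijk by simp
    qed
  qed
qed

lemma Q122_snoc: "Q122 (u@[x]) \<longleftrightarrow> Q122 u \<and> (\<forall>i<length u. u!i = x \<longrightarrow> x = 1)"
proof
  assume Q: "Q122 (u@[x])"
  have "Q122 u" unfolding Q122_def
  proof (intro allI impI)
    fix i j assume "i < j \<and> j < length u \<and> u!i = u!j"
    then show "u!i = 1" using Q[unfolded Q122_def, rule_format, of i j] by (simp add: nth_append)
  qed
  moreover have "\<forall>i<length u. u!i = x \<longrightarrow> x = 1"
  proof (intro allI impI)
    fix i assume "i < length u" "u!i = x"
    then show "x = 1" using Q[unfolded Q122_def, rule_format, of i "length u"] by (simp add: nth_append)
  qed
  ultimately show "Q122 u \<and> (\<forall>i<length u. u!i = x \<longrightarrow> x = 1)" by simp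
next
  assume H: "Q122 u \<and> (\<forall>i<length u. u!i = x \<longrightarrow> x = 1)"
  show "Q122 (u@[x])" unfolding Q122_def
  proof (intro allI impI)
    fix i j assume ij: "i < j \<and> j < length (u@[x]) \<and> (u@[x])!i = (u@[x])!j"
    show "(u@[x])!i = 1"
    proof (cases "j < length u")
      case True
      then have "i < length u" using ij by simp
      have "u!i = u!j" using ij True \<open>i < length u\<close> by (simp add: nth_append)
      then have "u!i = 1" using H \<open>i < length u\<close> True ij unfolding Q122_def by blast
      then show ?thesis using \<open>i < length u\<close> by (simp add: nth_append)
    next
      case False
      then have j: "j = length u" using ij by simp
      then have i: "i < length u" using ij by simp
      have "u!i = x" using ij j i by (simp add: nth_append)
      then have "x = 1" using H i by blast
      then show ?thesis using i \<open>u!i = x\<close> by (simp add: nth_append)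
    qed
  qed
qed

lemma double122: "card {w \<in> RG (Suc (Suc n)). Q122 w} = 2 * card {w \<in> RG (Suc n). Q122 w}"
proof (rule card_double)
  let ?A = "{w \<in> RG (Suc n). Q122 w}"
  let ?f = "\<lambda>u. u @ [1]"
  let ?g = "\<lambda>u. u @ [Suc (mx u)]"
  show "finite ?A" using finite_RG by simp
  show "inj_on ?f ?A" by (rule inj_onI) simp
  show "inj_on ?g ?A" by (rule inj_onI) simp
  show "?f ` ?A \<inter> ?g ` ?A = {}"
  proof -
    have "?f u \<noteq> ?g v" if "v \<in> ?A" for u v
      using RG_mx_pos[of v n] that by simp
    then show ?thesis by blast
  qed
  show "{w \<in> RG (Suc (Suc n)). Q122 w} = ?f ` ?A \<union> ?g ` ?A"
  proof (intro set_eqI iffI)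
    fix w assume "w \<in> {w \<in> RG (Suc (Suc n)). Q122 w}"
    then have w: "w \<in> RG (Suc (Suc n))" "Q122 w" by auto
    obtain u x where ux: "w = u @ [x]" using RG_Suc_split[OF w(1)] by blast
    have u: "u \<in> RG (Suc n)" "0 < x" "x \<le> Suc (mx u)" using w(1) ux RG_snoc by auto
    have Q: "Q122 u" "\<forall>i<length u. u!i = x \<longrightarrow> x = 1" using w(2) ux Q122_snoc by auto
    have "x = 1 \<or> x = Suc (mx u)"
    proof (rule ccontr)
      assume "\<not> (x = 1 \<or> x = Suc (mx u))"
      then have "x \<noteq> 1" "x \<le> mx u" using u by auto
      then have "x \<in> set u" using rgfw_set[of u] u unfolding RG_def by auto
      then obtain i where "i < length u" "u!i = x" by (auto simp: in_set_conv_nth)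
      then show False using Q(2) \<open>x \<noteq> 1\<close> by blast
    qed
    then show "w \<in> ?f ` ?A \<union> ?g ` ?A" using ux u(1) Q(1) by auto
  next
    fix w assume "w \<in> ?f ` ?A \<union> ?g ` ?A"
    then obtain u x where ux: "w = u @ [x]" "u \<in> ?A" "x = 1 \<or> x = Suc (mx u)" by auto
    have "0 < mx u" using RG_mx_pos ux(2) by blast
    then have "w \<in> RG (Suc (Suc n))" using ux RG_snoc by auto
    moreover have "Q122 w"
    proof -
      have "\<forall>i<length u. u!i = x \<longrightarrow> x = 1"
      proof (intro allI impI)
        fix i assume "i < length u" "u!i = x"
        moreover have "u!i \<le> mx u" using mx_ge calculation(1) by simp
        ultimately show "x = 1" using ux(3) by auto
      qed
      then show ?thesis using ux Q122_snoc by auto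
    qed
    ultimately show "w \<in> {w \<in> RG (Suc (Suc n)). Q122 w}" by simp
  qed
qed

lemma Av122: "Av [1,2,2] n = {w \<in> RG n. Q122 w}"
  unfolding Av_def using av122 by blast

lemma double_Av122: "card (Av [1,2,2] (Suc (Suc n))) = 2 * card (Av [1,2,2] (Suc n))"
  unfolding Av122 by (rule double122)

lemma mx_map_Suc: "mx (map Suc v) = (if v = [] then 0 else Suc (mx v))"
proof (induction v)
  case (Cons a v)
  then show ?case by (cases "v = []") (simp_all add: mx_Cons)
qed simp

lemma rgfw_1Suc: "(\<forall>x\<in>set v. 0 < x) \<Longrightarrow> rgfw (1 # map Suc v) \<longleftrightarrow> rgfw v"
proof (induction v rule: rev_induct)
  case Nil
  have "rgfw ([]@[1])" unfolding rgfw_snoc by simp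
  then show ?case by simp
next
  case (snoc x v)
  then have IH: "rgfw (1 # map Suc v) \<longleftrightarrow> rgfw v" and x: "0 < x" by auto
  have e: "1 # map Suc (v@[x]) = (1 # map Suc v) @ [Suc x]" by simp
  have m: "mx (1 # map Suc v) = (if v = [] then 1 else Suc (mx v))"
    by (simp add: mx_Cons mx_map_Suc)
  show ?case unfolding e rgfw_snoc IH using x m by auto
qed

abbreviation P112 :: "nat \<Rightarrow> nat \<Rightarrow> nat \<Rightarrow> bool" where "P112 \<equiv> (\<lambda>x y z. x = y \<and> y < z)"

lemma Av112: "Av [1,1,2] n = {w \<in> RG n. \<not> tri P112 w}"
  unfolding Av_def contains_112 by blast

lemma tri112_Suc: "tri P112 (map Suc u) \<longleftrightarrow> tri P112 u"
  unfolding tri_map by simp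

lemma double112: "card {w \<in> RG (Suc (Suc n)). \<not> tri P112 w} = 2 * card {w \<in> RG (Suc n). \<not> tri P112 w}"
proof (rule card_double)
  let ?A = "{w \<in> RG (Suc n). \<not> tri P112 w}"
  let ?f = "\<lambda>u. u @ [1::nat]"
  let ?g = "\<lambda>u. 1 # map Suc u"
  show "finite ?A" using finite_RG by simp
  show "inj_on ?f ?A" by (rule inj_onI) simp
  show "inj_on ?g ?A" by (rule inj_onI) simp
  show "?f ` ?A \<inter> ?g ` ?A = {}"
  proof -
    have "?f u \<noteq> ?g v" if "v \<in> ?A" for u v
    proof
      assume e: "?f u = ?g v"
      have "v \<noteq> []" using that unfolding RG_def by auto
      then have l: "last (?g v) = Suc (last v)" by (simp add: last_map)
      have "0 < last v" using RG_pos[of v] that \<open>v \<noteq> []\<close> by auto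
      moreover have "last (?f u) = 1" by simp
      moreover have "last (?f u) = last (?g v)" using e by (rule arg_cong)
      ultimately show False using l by linarith
    qed
    then show ?thesis by blast
  qed
  show "{w \<in> RG (Suc (Suc n)). \<not> tri P112 w} = ?f ` ?A \<union> ?g ` ?A"
  proof (intro set_eqI iffI)
    fix w assume "w \<in> {w \<in> RG (Suc (Suc n)). \<not> tri P112 w}"
    then have w: "w \<in> RG (Suc (Suc n))" "\<not> tri P112 w" by auto
    obtain u x where ux: "w = u @ [x]" using RG_Suc_split[OF w(1)] by blast
    have u: "u \<in> RG (Suc n)" "0 < x" "x \<le> Suc (mx u)" using w(1) ux RG_snoc by auto
    have nt: "\<not> tri P112 u" "\<not> (\<exists>i j. i<j \<and> j<length u \<and> P112 (u!i) (u!j) x)"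
      using w(2) ux tri_snoc[of P112 u x] by auto
    show "w \<in> ?f ` ?A \<union> ?g ` ?A"
    proof (cases "x = 1")
      case True
      then show ?thesis using ux u(1) nt(1) by auto
    next
      case False
      then have x1: "1 < x" using u(2) by simp
      have ne: "u \<noteq> []" using u(1) unfolding RG_def by auto
      have u0: "u!0 = 1" using rgfw_hd[OF _ ne] u(1) unfolding RG_def by auto
      have no1: "u!j \<noteq> 1" if "0 < j" "j < length u" for j
      proof
        assume "u!j = 1"
        then have "P112 (u!0) (u!j) x" using u0 x1 by simp
        then show False using nt(2) that by blast
      qed
      have pos: "0 < y" if "y \<in> set u" for y using RG_pos[OF u(1) that] .
      have big: "1 < y" if "y \<in> set (tl w)" for y
      proof -
        have "tl w = tl u @ [x]" using ux ne by simp
        then have "y \<in> set (tl u) \<or> y = x" using that by auto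
        then show ?thesis
        proof
          assume "y \<in> set (tl u)"
          then obtain j where j: "j < length (tl u)" "tl u ! j = y" by (auto simp: in_set_conv_nth)
          then have "u!(Suc j) = y" "Suc j < length u" using ne by (auto simp: nth_tl)
          then have "y \<noteq> 1" "0 < y" using no1[of "Suc j"] pos[of y] nth_mem by auto
          then show ?thesis by simp
        qed (use x1 in simp)
      qed
      define v where "v = map (\<lambda>a. a - 1) (tl w)"
      have mv: "map Suc v = tl w"
      proof -
        have "map (\<lambda>a. Suc (a - 1)) (tl w) = tl w"
        proof (rule map_idI)
          fix a assume "a \<in> set (tl w)"
          then show "Suc (a - 1) = a" using big by fastforce
        qed
        then show ?thesis unfolding v_def by (simp add: comp_def)
      qed
      have w0: "w = 1 # tl w" using ux ne u0 by (cases u) auto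
      have wv: "w = 1 # map Suc v" using w0 mv by simp
      have vpos: "\<forall>a\<in>set v. 0 < a" unfolding v_def using big by auto
      have "rgfw w" using w(1) unfolding RG_def by simp
      then have "rgfw v" using rgfw_1Suc[OF vpos] wv by simp
      moreover have "length v = Suc n" using w(1) unfolding v_def RG_def by simp
      moreover have "\<not> tri P112 v"
      proof
        assume "tri P112 v"
        then have "tri P112 w" unfolding wv tri_Cons tri112_Suc by simp
        then show False using w(2) by simp
      qed
      ultimately have "v \<in> ?A" unfolding RG_def by simp
      then show ?thesis using wv by blast
    qed
  next
    fix w assume "w \<in> ?f ` ?A \<union> ?g ` ?A"
    then show "w \<in> {w \<in> RG (Suc (Suc n)). \<not> tri P112 w}"
    proof
      assume "w \<in> ?f ` ?A"
      then obtain u where u: "w = u @ [1]" "u \<in> RG (Suc n)" "\<not> tri P112 u" by auto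
      have "w \<in> RG (Suc (Suc n))" using u RG_snoc by auto
      moreover have "\<not> tri P112 w"
      proof
        assume "tri P112 w"
        then obtain i j where "i<j" "j<length u" "u!i = u!j" "u!j < 1"
          using u tri_snoc[of P112 u 1] by auto
        moreover have "0 < u!j" using RG_pos[OF u(2)] calculation(2) by simp
        ultimately show False by simp
      qed
      ultimately show ?thesis by simp
    next
      assume "w \<in> ?g ` ?A"
      then obtain u where u: "w = 1 # map Suc u" "u \<in> RG (Suc n)" "\<not> tri P112 u" by auto
      have pos: "\<forall>a\<in>set u. 0 < a" using RG_pos[OF u(2)] by blast
      have "rgfw w" using rgfw_1Suc[OF pos] u(1,2) unfolding RG_def by simp
      then have "w \<in> RG (Suc (Suc n))" using u(1,2) unfolding RG_def by simp
      moreover have "\<not> tri P112 w"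
      proof
        assume "tri P112 w"
        then have "tri P112 (map Suc u) \<or> (\<exists>j k. j<k \<and> k<length (map Suc u) \<and> P112 1 (map Suc u!j) (map Suc u!k))"
          unfolding u(1) tri_Cons by simp
        moreover have "\<not> tri P112 (map Suc u)" using u(3) tri112_Suc by simp
        ultimately obtain j k where "j<k" "k<length u" "1 = Suc (u!j)" by auto
        moreover have "0 < u!j" using pos calculation(1,2) by simp
        ultimately show False by simp
      qed
      ultimately show ?thesis by simp
    qed
  qed
qed

lemma double_Av112: "card (Av [1,1,2] (Suc (Suc n))) = 2 * card (Av [1,1,2] (Suc n))"
  unfolding Av112 by (rule double112)

definition ap :: "rat poly \<Rightarrow> (nat \<Rightarrow> rat) \<Rightarrow> nat \<Rightarrow> rat" where
  "ap q f n = (\<Sum>i\<le>degree q. coeff q i * f (n+i))"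

lemma ap_bound:
  assumes "degree q \<le> N"
  shows "ap q f n = (\<Sum>i\<le>N. coeff q i * f (n+i))"
  unfolding ap_def
proof (rule sum.mono_neutral_left)
  show "finite {..N}" by simp
  show "{..degree q} \<subseteq> {..N}" using assms by auto
  show "\<forall>i\<in>{..N} - {..degree q}. coeff q i * f (n + i) = 0" by (auto simp: coeff_eq_0)
qed

lemma ap_add: "ap (p + q) f n = ap p f n + ap q f n"
proof -
  let ?N = "max (degree p) (degree q)"
  have "degree (p + q) \<le> ?N" by (rule degree_add_le_max)
  then have "ap (p+q) f n = (\<Sum>i\<le>?N. coeff (p+q) i * f (n+i))" by (rule ap_bound)
  also have "\<dots> = (\<Sum>i\<le>?N. coeff p i * f (n+i)) + (\<Sum>i\<le>?N. coeff q i * f (n+i))"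
    by (simp add: distrib_right sum.distrib)
  also have "\<dots> = ap p f n + ap q f n"
    using ap_bound[of p ?N] ap_bound[of q ?N] by simp
  finally show ?thesis .
qed

lemma ap_smult: "ap (smult a q) f n = a * ap q f n"
proof -
  have "ap (smult a q) f n = (\<Sum>i\<le>degree q. coeff (smult a q) i * f (n+i))"
    by (rule ap_bound[OF degree_smult_le])
  also have "\<dots> = a * ap q f n" unfolding ap_def by (simp add: sum_distrib_left mult.assoc)
  finally show ?thesis .
qed

lemma ap_0[simp]: "ap 0 f n = 0" unfolding ap_def by simp

lemma ap_pCons: "ap (pCons a p) f n = a * f n + ap p f (Suc n)"
proof -
  have "degree (pCons a p) \<le> Suc (degree p)" by (simp add: degree_pCons_le)
  then have "ap (pCons a p) f n = (\<Sum>i\<le>Suc (degree p). coeff (pCons a p) i * f (n+i))" by (rule ap_bound)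
  also have "\<dots> = (\<Sum>i\<le>degree p. coeff (pCons a p) (Suc i) * f (n + Suc i)) + coeff (pCons a p) 0 * f (n+0)"
    by (rule sum.atMost_Suc_shift[THEN trans]) simp
  also have "\<dots> = a * f n + ap p f (Suc n)" unfolding ap_def by simp
  finally show ?thesis .
qed

lemma ap_mult: "ap (p * q) f n = ap p (ap q f) n"
proof (induction p arbitrary: n)
  case 0
  then show ?case by simp
next
  case (pCons a p)
  have "ap (pCons a p * q) f n = ap (smult a q + pCons 0 (p * q)) f n" by simp
  also have "\<dots> = a * ap q f n + ap (p * q) f (Suc n)" by (simp add: ap_add ap_smult ap_pCons)
  also have "\<dots> = a * ap q f n + ap p (ap q f) (Suc n)" using pCons.IH by simp
  also have "\<dots> = ap (pCons a p) (ap q f) n" by (simp add: ap_pCons)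
  finally show ?case .
qed

lemma ap_one: "ap 1 f n = f n"
  using ap_pCons[of 1 0 f n] by (simp add: one_pCons)

lemma ap_lin: "ap [:- of_nat j, 1:] f n = f (Suc n) - of_nat j * f n"
  by (simp add: ap_pCons ap_one[unfolded one_pCons])

lemma ap_sum_fun: "finite K \<Longrightarrow> ap q (\<lambda>n. \<Sum>k\<in>K. F k n) n = (\<Sum>k\<in>K. ap q (F k) n)"
  unfolding ap_def by (simp add: sum_distrib_left sum.swap[of _ K])

lemma P_rec_ap:
  assumes q: "q \<noteq> 0" and h: "\<And>n. n \<ge> 1 \<Longrightarrow> ap q (\<lambda>n. of_nat (a n)) n = 0"
  shows "P_recursive a"
  unfolding P_recursive_def
proof (rule exI[of _ "degree q"], rule exI[of _ "\<lambda>i. [:0, coeff q i:]"], intro conjI allI)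
  let ?P = "\<lambda>i. [:0, coeff q i:]"
  show "\<exists>i\<le>degree q. ?P i \<noteq> 0"
    using q by (intro exI[of _ "degree q"]) simp
  fix n
  have "(\<Sum>i\<le>degree q. poly (?P i) (of_nat n) * of_nat (a (n + i))) =
        of_nat n * ap q (\<lambda>n. of_nat (a n)) n"
    unfolding ap_def by (simp add: sum_distrib_left mult.assoc mult.left_commute)
  also have "\<dots> = 0" using h[of n] by (cases n) auto
  finally show "(\<Sum>i\<le>degree q. poly (?P i) (of_nat n) * of_nat (a (n + i))) = 0" .
qed

lemma P_rec_double:
  assumes "\<And>n. a (Suc (Suc n)) = 2 * a (Suc n)"
  shows "P_recursive a"
proof (rule P_rec_ap[of "[:0, -2, 1:]"])
  show "[:0, -2, 1:] \<noteq> (0::rat poly)" by simp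
  fix n :: nat assume "n \<ge> 1"
  have "ap [:0, -2, 1:] (\<lambda>n. of_nat (a n)) n = - 2 * of_nat (a (Suc n)) + of_nat (a (Suc (Suc n)))"
    by (simp add: ap_pCons)
  also have "\<dots> = 0" using assms[of n] by simp
  finally show "ap [:0, -2, 1:] (\<lambda>n. of_nat (a n)) n = 0" .
qed

lemma P_rec_rec:
  fixes Q :: "nat \<Rightarrow> rat poly"
  assumes "\<And>n. of_nat (a (n + k)) = (\<Sum>i<k. poly (Q i) (of_nat n) * of_nat (a (n + i)))"
  shows "P_recursive a"
  unfolding P_recursive_def
proof (rule exI[of _ k], rule exI[of _ "\<lambda>i. if i = k then 1 else - Q i"], intro conjI allI)
  let ?P = "\<lambda>i. if i = k then 1 else - Q i"
  show "\<exists>i\<le>k. ?P i \<noteq> 0" by (intro exI[of _ k]) simp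
  fix n
  have "(\<Sum>i\<le>k. poly (?P i) (of_nat n) * of_nat (a (n + i))) =
      (\<Sum>i<k. poly (?P i) (of_nat n) * of_nat (a (n + i))) + of_nat (a (n + k))"
    by (simp add: lessThan_Suc_atMost[symmetric])
  also have "(\<Sum>i<k. poly (?P i) (of_nat n) * of_nat (a (n + i))) =
      - (\<Sum>i<k. poly (Q i) (of_nat n) * of_nat (a (n + i)))"
    by (simp add: sum_negf[symmetric])
  finally show "(\<Sum>i\<le>k. poly (?P i) (of_nat n) * of_nat (a (n + i))) = 0" using assms[of n] by simp
qed

declare upt_Suc[simp del]

lemma std_upt: "standardize [1..<Suc m] = [1..<Suc m]"
proof (rule nth_equalityI)
  show "length (standardize [1..<Suc m]) = length [1..<Suc m]" by simp
next
  fix i assume "i < length (standardize [1..<Suc m])"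
  then have i: "i < m" by simp
  have "{y \<in> set [1..<Suc m]. y \<le> [1..<Suc m] ! i} = {1..Suc i}" using i by auto
  then show "standardize [1..<Suc m] ! i = [1..<Suc m] ! i"
    unfolding standardize_def using i by simp
qed

lemma subseq_upt: "rgfw w \<Longrightarrow> k \<le> mx w \<Longrightarrow> subseq [1..<Suc k] w"
proof (induction w arbitrary: k rule: rev_induct)
  case Nil
  then show ?case by simp
next
  case (snoc x xs)
  then have R: "rgfw xs" "0 < x" "x \<le> Suc (mx xs)" by (auto simp: rgfw_snoc)
  show ?case
  proof (cases "k \<le> mx xs")
    case True
    then show ?thesis using snoc.IH[OF R(1)] by (simp add: subseq_rev_drop_many)
  next
    case False
    then have k: "k = Suc (mx xs)" "x = k" using snoc.prems R by auto
    have "subseq [1..<Suc (mx xs)] xs" using snoc.IH[OF R(1)] by simp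
    moreover have "[1..<Suc k] = [1..<Suc (mx xs)] @ [k]" using k by (simp add: upt_Suc)
    ultimately show ?thesis using k list_emb_append_mono[of "(=)" "[1..<Suc (mx xs)]" xs "[k]" "[x]"] by simp
  qed
qed

lemma contains_upt:
  assumes R: "rgfw w"
  shows "contains w [1..<Suc m] \<longleftrightarrow> m \<le> mx w"
proof
  assume "contains w [1..<Suc m]"
  then obtain I where I: "standardize (nths w I) = [1..<Suc m]" unfolding contains_def by blast
  have "set (standardize (nths w I)) = (\<lambda>x. card {y \<in> set (nths w I). y \<le> x}) ` set (nths w I)"
    unfolding standardize_def by simp
  then have "card (set (standardize (nths w I))) \<le> card (set (nths w I))" by (simp add: card_image_le)
  also have "\<dots> \<le> card (set w)" by (rule card_mono) (simp_all add: set_nths_subset)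
  also have "\<dots> = mx w" using rgfw_set[OF R] by simp
  finally show "m \<le> mx w" using I by simp
next
  assume "m \<le> mx w"
  then have "subseq [1..<Suc m] w" using subseq_upt[OF R] by simp
  then show "contains w [1..<Suc m]" using contains_subseq std_upt by blast
qed

lemma Av_upt: "Av [1..<Suc m] n = {w \<in> RG n. mx w < m}"
  unfolding Av_def RG_def using contains_upt by auto

definition cS :: "nat \<Rightarrow> nat \<Rightarrow> nat" where "cS k n = card {w \<in> RG n. mx w = k}"

lemma card_mx_less: "card {w \<in> RG n. mx w < m} = (\<Sum>k<m. cS k n)"
proof (induction m)
  case 0 then show ?case by simp
next
  case (Suc m)
  have "{w \<in> RG n. mx w < Suc m} = {w \<in> RG n. mx w < m} \<union> {w \<in> RG n. mx w = m}" by auto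
  moreover have "finite {w \<in> RG n. mx w < m}" "finite {w \<in> RG n. mx w = m}" using finite_RG by simp_all
  ultimately have "card {w \<in> RG n. mx w < Suc m} = card {w \<in> RG n. mx w < m} + card {w \<in> RG n. mx w = m}"
    by (simp add: card_Un_disjoint disjoint_iff)
  then show ?case using Suc.IH unfolding cS_def by simp
qed

lemma cS_0: "cS 0 n = (if n = 0 then 1 else 0)"
proof (cases n)
  case 0
  have "{w \<in> RG 0. mx w = 0} = {[]}" unfolding RG_def by auto
  then show ?thesis unfolding cS_def using 0 by simp
next
  case (Suc n')
  have E: "{w \<in> RG n. mx w = 0} = {}"
  proof (rule ccontr)
    assume "{w \<in> RG n. mx w = 0} \<noteq> {}"
    then obtain w where "w \<in> RG (Suc n')" "mx w = 0" using Suc by auto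
    then show False using RG_mx_pos[of w n'] by simp
  qed
  show ?thesis unfolding cS_def E using Suc by simp
qed

lemma cS_Suc:
  assumes k: "0 < k"
  shows "cS k (Suc n) = k * cS k n + cS (k - 1) n"
proof -
  let ?A = "{u \<in> RG n. mx u = k} \<times> {1..k}"
  let ?B = "{u \<in> RG n. mx u = k - 1}"
  let ?f = "\<lambda>(u, x). u @ [x::nat]"
  let ?g = "\<lambda>u. u @ [k]"
  have eq: "{w \<in> RG (Suc n). mx w = k} = ?f ` ?A \<union> ?g ` ?B"
  proof (intro set_eqI iffI)
    fix w assume "w \<in> {w \<in> RG (Suc n). mx w = k}"
    then have w: "w \<in> RG (Suc n)" "mx w = k" by auto
    obtain u x where ux: "w = u @ [x]" using RG_Suc_split[OF w(1)] by blast
    have u: "u \<in> RG n" "0 < x" "x \<le> Suc (mx u)" using w(1) ux RG_snoc by auto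
    have m: "max (mx u) x = k" using w(2) ux by simp
    show "w \<in> ?f ` ?A \<union> ?g ` ?B"
    proof (cases "mx u = k")
      case True
      then have "(u, x) \<in> ?A" using u m by auto
      then show ?thesis using ux by force
    next
      case False
      then have "x = k" "mx u = k - 1" using m u by auto
      then show ?thesis using ux u(1) by auto
    qed
  next
    fix w assume "w \<in> ?f ` ?A \<union> ?g ` ?B"
    then show "w \<in> {w \<in> RG (Suc n). mx w = k}"
    proof
      assume "w \<in> ?f ` ?A"
      then obtain u x where "w = u @ [x]" "u \<in> RG n" "mx u = k" "1 \<le> x" "x \<le> k" by auto
      then show ?thesis using RG_snoc by auto
    next
      assume "w \<in> ?g ` ?B"
      then obtain u where "w = u @ [k]" "u \<in> RG n" "mx u = k - 1" by auto
      then show ?thesis using RG_snoc k by auto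
    qed
  qed
  have fA: "finite ?A" using finite_RG by simp
  have fB: "finite ?B" using finite_RG by simp
  have disj: "?f ` ?A \<inter> ?g ` ?B = {}" using k by auto
  have injf: "inj_on ?f ?A" by (rule inj_onI) auto
  have injg: "inj_on ?g ?B" by (rule inj_onI) auto
  have "cS k (Suc n) = card (?f ` ?A) + card (?g ` ?B)"
    unfolding cS_def eq using fA fB disj by (simp add: card_Un_disjoint)
  also have "\<dots> = card ?A + card ?B" using injf injg by (simp add: card_image)
  also have "\<dots> = k * cS k n + cS (k - 1) n" unfolding cS_def by (simp add: card_cartesian_product)
  finally show ?thesis .
qed

definition cq :: "nat \<Rightarrow> rat poly" where "cq k = (\<Prod>j\<in>{1..k}. [:- of_nat j, 1:])"
definition cr :: "nat \<Rightarrow> nat \<Rightarrow> rat" where "cr k n = of_nat (cS k n)"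

lemma ap_E_cr: "0 < k \<Longrightarrow> ap [:- of_nat k, 1:] (cr k) = cr (k - 1)"
proof
  fix n assume k: "0 < k"
  show "ap [:- of_nat k, 1:] (cr k) n = cr (k - 1) n"
    unfolding ap_lin cr_def cS_Suc[OF k] by simp
qed

lemma ap_cq: "ap (cq k) (cr k) n = (if n = 0 then 1 else 0)"
proof (induction k arbitrary: n)
  case 0
  have "cq 0 = 1" unfolding cq_def by simp
  then show ?case by (simp add: ap_one cr_def cS_0)
next
  case (Suc k)
  have "{1..Suc k} = insert (Suc k) {1..k}" by auto
  then have e: "cq (Suc k) = cq k * [:- of_nat (Suc k), 1:]" unfolding cq_def by (simp add: mult.commute)
  have "ap (cq (Suc k)) (cr (Suc k)) n = ap (cq k) (ap [:- of_nat (Suc k), 1:] (cr (Suc k))) n"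
    unfolding e by (rule ap_mult)
  also have "\<dots> = ap (cq k) (cr k) n" unfolding ap_E_cr[OF zero_less_Suc, unfolded diff_Suc_1] ..
  finally show ?case using Suc.IH by simp
qed

lemma ap_cq_vanish:
  assumes "k < m" "1 \<le> n"
  shows "ap (cq (m - 1)) (cr k) n = 0"
proof -
  define R where "R = (\<Prod>j\<in>{Suc k..m-1}. [:- of_nat j, 1::rat:])"
  have "{1..m-1} = {1..k} \<union> {Suc k..m-1}" using assms by auto
  moreover have "{1..k} \<inter> {Suc k..m-1} = {}" by auto
  ultimately have "cq (m - 1) = R * cq k" unfolding cq_def R_def
    by (simp add: prod.union_disjoint mult.commute)
  then have "ap (cq (m - 1)) (cr k) n = ap R (ap (cq k) (cr k)) n" by (simp only: ap_mult)
  also have "\<dots> = ap R (\<lambda>n. if n = 0 then 1 else 0) n" using ap_cq by presburger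
  also have "\<dots> = 0" unfolding ap_def using assms by simp
  finally show ?thesis .
qed

lemma cq_nz: "cq k \<noteq> 0"
proof -
  have "lead_coeff (cq k) = 1" unfolding cq_def lead_coeff_prod by simp
  then show ?thesis by auto
qed

lemma P_rec_upt: "P_recursive (\<lambda>n. card (Av [1..<Suc m] n))"
proof (rule P_rec_ap[OF cq_nz[of "m - 1"]])
  fix n :: nat assume n: "n \<ge> 1"
  have "(\<lambda>n. rat_of_nat (card (Av [1..<Suc m] n))) = (\<lambda>n. \<Sum>k<m. cr k n)"
    unfolding Av_upt card_mx_less cr_def by simp
  then have "ap (cq (m - 1)) (\<lambda>n. of_nat (card (Av [1..<Suc m] n))) n = (\<Sum>k<m. ap (cq (m - 1)) (cr k) n)"
    by (simp add: ap_sum_fun)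
  also have "\<dots> = 0" using ap_cq_vanish n by simp
  finally show "ap (cq (m - 1)) (\<lambda>n. of_nat (card (Av [1..<Suc m] n))) n = 0" .
qed

lemma rgf_one_block:
  assumes m: "1 \<le> m"
  shows "rgf (one_block_part m) = replicate m 1"
proof -
  let ?\<sigma> = "one_block_part m"
  have P: "partition_on {1..m} ?\<sigma>" unfolding one_block_part_def using m by (simp add: partition_on_space)
  then have s: "?\<sigma> \<in> Pi_set m" unfolding Pi_set_def by simp
  have "gB ?\<sigma> (block_of ?\<sigma> i) = 1" if "i \<in> set [1..<Suc m]" for i
  proof -
    have "block_of ?\<sigma> i = {1..m}" using block_of_eq[OF P, of "{1..m}" i] that unfolding one_block_part_def by auto
    moreover have "{C \<in> ?\<sigma>. Min C \<le> Min {1..m}} = {{1..m}}" unfolding one_block_part_def by auto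
    ultimately show ?thesis unfolding gB_def by simp
  qed
  then have "rgf ?\<sigma> = map (\<lambda>_. 1) [1..<Suc m]" unfolding rgf_Pi[OF s] by (rule map_cong[OF refl])
  also have "\<dots> = replicate m 1" by (simp add: map_replicate_const)
  finally show ?thesis .
qed

lemma rgf_singletons: "rgf (singletons_part m) = [1..<Suc m]"
proof -
  let ?\<sigma> = "singletons_part m"
  have P: "partition_on {1..m} ?\<sigma>" unfolding singletons_part_def by (rule partition_on_singletons)
  then have s: "?\<sigma> \<in> Pi_set m" unfolding Pi_set_def by simp
  have "gB ?\<sigma> (block_of ?\<sigma> i) = i" if "i \<in> set [1..<Suc m]" for i
  proof -
    have i: "i \<in> {1..m}" using that by auto
    have "block_of ?\<sigma> i = {i}" using block_of_eq[OF P, of "{i}" i] i unfolding singletons_part_def by auto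
    moreover have "{C \<in> ?\<sigma>. Min C \<le> Min {i}} = (\<lambda>j. {j}) ` {1..i}"
      unfolding singletons_part_def using i by auto
    moreover have "card ((\<lambda>j. {j::nat}) ` {1..i}) = i" by (simp add: card_image)
    ultimately show ?thesis unfolding gB_def by simp
  qed
  then have "rgf ?\<sigma> = map (\<lambda>i. i) [1..<Suc m]" unfolding rgf_Pi[OF s] by (rule map_cong[OF refl])
  then show ?thesis by simp
qed

lemma std_rep:
  assumes "1 \<le> m"
  shows "standardize (replicate m v) = replicate m 1"
proof -
  have "set (replicate m v) = {v}" using assms by simp
  moreover have "{y \<in> {v}. y \<le> v} = {v}" by auto
  ultimately show ?thesis unfolding standardize_def by (simp add: map_replicate_const)
qed

lemma std_rep_inv:
  assumes "standardize s = replicate m 1"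
  shows "s = replicate m (s!0)"
proof (rule nth_equalityI)
  have L: "length s = m" using arg_cong[OF assms, of length] by simp
  then show "length s = length (replicate m (s!0))" by simp
  have one: "card {y \<in> set s. y \<le> s!i} = 1" if "i < m" for i
    using arg_cong[OF assms, of "\<lambda>l. l!i"] that L unfolding standardize_def by simp
  have le: "s!j \<le> s!i" if "i < m" "j < m" for i j
  proof (rule ccontr)
    assume "\<not> s!j \<le> s!i"
    then have "{s!i, s!j} \<subseteq> {y \<in> set s. y \<le> s!j}" using that L by auto
    then have "card {s!i, s!j} \<le> card {y \<in> set s. y \<le> s!j}" by (rule card_mono[rotated]) simp
    then show False using one[of j] that \<open>\<not> s!j \<le> s!i\<close> by (simp add: card_insert_if)
  qed
  fix i assume "i < length s"
  then have "i < m" "0 < m" using L by auto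
  then have "s!i = s!0" using le[of i 0] le[of 0 i] by simp
  then show "s!i = replicate m (s!0) ! i" using \<open>i < m\<close> by simp
qed

lemma contains_rep:
  assumes m: "1 \<le> m"
  shows "contains w (replicate m 1) \<longleftrightarrow> (\<exists>v. m \<le> count_list w v)"
proof
  assume "contains w (replicate m 1)"
  then obtain s where s: "subseq s w" "standardize s = replicate m 1" using contains_subseq by blast
  define v where "v = s!0"
  have sv: "s = replicate m v" using std_rep_inv[OF s(2)] unfolding v_def .
  have "subseq (filter ((=) v) s) (filter ((=) v) w)" using subseq_filter[OF s(1)] .
  then have "length (filter ((=) v) s) \<le> length (filter ((=) v) w)" by (rule list_emb_length)
  moreover have "length (filter ((=) v) s) = m" unfolding sv by simp
  ultimately show "\<exists>v. m \<le> count_list w v" by (metis count_list_eq_length_filter)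
next
  assume "\<exists>v. m \<le> count_list w v"
  then obtain v where v: "m \<le> count_list w v" by blast
  define c where "c = count_list w v"
  have "filter ((=) v) w = replicate c v"
    unfolding c_def count_list_eq_length_filter by (rule replicate_length_filter[symmetric])
  then have "subseq (replicate c v) w" by (metis subseq_filter_left)
  moreover have "replicate c v = replicate m v @ replicate (c - m) v"
    using v unfolding c_def by (simp add: replicate_add[symmetric])
  ultimately have "subseq (replicate m v) w"
    by (metis list_emb_trans subseq_order.order_refl subseq_rev_drop_many)
  then show "contains w (replicate m 1)" using contains_subseq std_rep[OF m] by blast
qed

lemma count_rgf:
  assumes s: "\<sigma> \<in> Pi_set n"
  shows "count_list (rgf \<sigma>) v = card {i \<in> {1..n}. gB \<sigma> (block_of \<sigma> i) = v}"
proof -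
  have "count_list (rgf \<sigma>) v = length (filter ((=) v) (map (\<lambda>i. gB \<sigma> (block_of \<sigma> i)) [1..<Suc n]))"
    unfolding rgf_Pi[OF s] count_list_eq_length_filter ..
  also have "\<dots> = length (filter (\<lambda>i. v = gB \<sigma> (block_of \<sigma> i)) [1..<Suc n])"
    by (simp add: filter_map comp_def)
  also have "\<dots> = card ({i. v = gB \<sigma> (block_of \<sigma> i)} \<inter> set [1..<Suc n])"
    by (rule distinct_length_filter) simp
  also have "({i. v = gB \<sigma> (block_of \<sigma> i)} \<inter> set [1..<Suc n]) = {i \<in> {1..n}. gB \<sigma> (block_of \<sigma> i) = v}"
    by auto
  finally show ?thesis .
qed

lemma block_count:
  assumes s: "\<sigma> \<in> Pi_set n" and B: "B \<in> \<sigma>"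
  shows "{i \<in> {1..n}. gB \<sigma> (block_of \<sigma> i) = gB \<sigma> B} = B"
proof -
  have P: "partition_on {1..n} \<sigma>" using s unfolding Pi_set_def by simp
  show ?thesis
  proof (intro set_eqI iffI)
    fix i assume "i \<in> {i \<in> {1..n}. gB \<sigma> (block_of \<sigma> i) = gB \<sigma> B}"
    then have i: "i \<in> {1..n}" "gB \<sigma> (block_of \<sigma> i) = gB \<sigma> B" by auto
    then have "block_of \<sigma> i = B" using gB_inj[OF P block_of_in(1)[OF P i(1)] B] by simp
    then show "i \<in> B" using block_of_in(2)[OF P i(1)] by simp
  next
    fix i assume i: "i \<in> B"
    then have "i \<in> {1..n}" using part_fin(2)[OF P B] by blast
    moreover have "block_of \<sigma> i = B" using block_of_eq[OF P B i] .
    ultimately show "i \<in> {i \<in> {1..n}. gB \<sigma> (block_of \<sigma> i) = gB \<sigma> B}" by simp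
  qed
qed

lemma contains_rgf_rep:
  assumes m: "1 \<le> m" and s: "\<sigma> \<in> Pi_set n"
  shows "contains (rgf \<sigma>) (replicate m 1) \<longleftrightarrow> (\<exists>B\<in>\<sigma>. m \<le> card B)"
proof -
  have P: "partition_on {1..n} \<sigma>" using s unfolding Pi_set_def by simp
  show ?thesis unfolding contains_rep[OF m] count_rgf[OF s]
  proof
    assume "\<exists>v. m \<le> card {i \<in> {1..n}. gB \<sigma> (block_of \<sigma> i) = v}"
    then obtain v where v: "m \<le> card {i \<in> {1..n}. gB \<sigma> (block_of \<sigma> i) = v}" by blast
    then have "{i \<in> {1..n}. gB \<sigma> (block_of \<sigma> i) = v} \<noteq> {}" using m by (metis card.empty le_zero_eq not_one_le_zero)
    then obtain i where i: "i \<in> {1..n}" "gB \<sigma> (block_of \<sigma> i) = v" by blast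
    have "block_of \<sigma> i \<in> \<sigma>" using block_of_in(1)[OF P i(1)] .
    moreover have "m \<le> card (block_of \<sigma> i)" using v block_count[OF s calculation] i(2) by simp
    ultimately show "\<exists>B\<in>\<sigma>. m \<le> card B" by blast
  next
    assume "\<exists>B\<in>\<sigma>. m \<le> card B"
    then obtain B where "B \<in> \<sigma>" "m \<le> card B" by blast
    then show "\<exists>v. m \<le> card {i \<in> {1..n}. gB \<sigma> (block_of \<sigma> i) = v}"
      using block_count[OF s] by (intro exI[of _ "gB \<sigma> B"]) simp
  qed
qed

lemma R_avoid_rep:
  assumes m: "1 \<le> m"
  shows "R_avoid n (one_block_part m) = {\<sigma>. partition_on {1..n} \<sigma> \<and> (\<forall>B\<in>\<sigma>. card B < m)}"
proof -
  have "R_avoid n (one_block_part m) = {\<sigma> \<in> Pi_set n. \<not> contains (rgf \<sigma>) (replicate m 1)}"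
    unfolding R_avoid_def rgf_one_block[OF m] ..
  also have "\<dots> = {\<sigma> \<in> Pi_set n. \<not> (\<exists>B\<in>\<sigma>. m \<le> card B)}"
    using contains_rgf_rep[OF m] by blast
  also have "\<dots> = {\<sigma>. partition_on {1..n} \<sigma> \<and> (\<forall>B\<in>\<sigma>. card B < m)}"
    unfolding Pi_set_def by force
  finally show ?thesis .
qed

definition FB :: "nat \<Rightarrow> nat set \<Rightarrow> nat set set set" where
  "FB m S = {\<sigma>. partition_on S \<sigma> \<and> (\<forall>B\<in>\<sigma>. card B < m)}"

fun fr :: "nat \<Rightarrow> nat \<Rightarrow> nat" where
  "fr m 0 = 1"
| "fr m (Suc n) = (\<Sum>j\<le>n. if j + 2 \<le> m then (n choose j) * fr m (n - j) else 0)"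

lemma finite_FB: "finite S \<Longrightarrow> finite (FB m S)"
  unfolding FB_def by (rule finite_subset[OF _ finitely_many_partition_on]) auto

lemma FB_decomp:
  assumes fin: "finite S" and a: "a \<in> S"
  shows "card (FB m S) = (\<Sum>B\<in>{B. a \<in> B \<and> B \<subseteq> S \<and> card B < m}. card (FB m (S - B)))"
proof -
  let ?Bs = "{B. a \<in> B \<and> B \<subseteq> S \<and> card B < m}"
  let ?X = "Sigma ?Bs (\<lambda>B. FB m (S - B))"
  let ?\<Phi> = "\<lambda>(B, \<tau>). insert B \<tau>"
  have "?Bs \<subseteq> Pow S" by auto
  then have finBs: "finite ?Bs" using fin by (simp add: finite_subset)
  have key: "a \<notin> \<Union>\<tau>" "B \<notin> \<tau>" "disjnt B (\<Union>\<tau>)" if "(B, \<tau>) \<in> ?X" for B \<tau>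
  proof -
    have "partition_on (S - B) \<tau>" "a \<in> B" using that unfolding FB_def by auto
    then have U: "\<Union>\<tau> = S - B" using partition_onD1 by blast
    then show "a \<notin> \<Union>\<tau>" "disjnt B (\<Union>\<tau>)" using \<open>a \<in> B\<close> by (auto simp: disjnt_def)
    show "B \<notin> \<tau>" using U \<open>a \<in> B\<close> by blast
  qed
  have bij: "bij_betw ?\<Phi> ?X (FB m S)"
  proof (rule bij_betw_imageI)
    show "inj_on ?\<Phi> ?X"
    proof (rule inj_onI)
      fix x y assume x: "x \<in> ?X" and y: "y \<in> ?X" and e: "?\<Phi> x = ?\<Phi> y"
      obtain B \<tau> where xB: "x = (B, \<tau>)" by (cases x)
      obtain B' \<tau>' where yB: "y = (B', \<tau>')" by (cases y)
      have e': "insert B \<tau> = insert B' \<tau>'" using e xB yB by simp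
      have aB: "a \<in> B" "a \<in> B'" using x y xB yB by auto
      have "B' \<in> insert B \<tau>" using e' by blast
      moreover have "B' \<notin> \<tau>" using key(1)[of B \<tau>] x xB aB by blast
      ultimately have BB: "B = B'" by simp
      have "\<tau> = insert B \<tau> - {B}" using key(2)[of B \<tau>] x xB by blast
      also have "\<dots> = insert B' \<tau>' - {B'}" using e' BB by simp
      also have "\<dots> = \<tau>'" using key(2)[of B' \<tau>'] y yB by blast
      finally show "x = y" using xB yB BB by simp
    qed
  next
    show "?\<Phi> ` ?X = FB m S"
    proof (intro set_eqI iffI)
      fix \<sigma> assume "\<sigma> \<in> ?\<Phi> ` ?X"
      then obtain x where x: "x \<in> ?X" "\<sigma> = ?\<Phi> x" by blast
      obtain B \<tau> where xB: "x = (B, \<tau>)" by (cases x)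
      have Bt: "(B, \<tau>) \<in> ?X" "\<sigma> = insert B \<tau>" using x xB by simp_all
      have P: "partition_on (S - B) \<tau>" "\<forall>C\<in>\<tau>. card C < m" "a \<in> B" "B \<subseteq> S" "card B < m"
        using Bt(1) unfolding FB_def by simp_all
      have "partition_on S \<sigma>" unfolding Bt(2) partition_on_insert[OF key(3)[OF Bt(1)]] using P by blast
      moreover have "\<forall>C\<in>\<sigma>. card C < m" unfolding Bt(2) using P by blast
      ultimately show "\<sigma> \<in> FB m S" unfolding FB_def by simp
    next
      fix \<sigma> assume "\<sigma> \<in> FB m S"
      then have P: "partition_on S \<sigma>" and sz: "\<forall>C\<in>\<sigma>. card C < m" unfolding FB_def by simp_all
      define B where "B = block_of \<sigma> a"
      have B: "B \<in> \<sigma>" "a \<in> B" using block_of_in[OF P a] unfolding B_def by simp_all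
      have BS: "B \<subseteq> S" using partition_onD1[OF P] B(1) by blast
      have dj: "disjnt B (\<Union>(\<sigma> - {B}))"
        unfolding disjnt_def using disjointD[OF partition_onD2[OF P] B(1)] by blast
      have e: "\<sigma> = insert B (\<sigma> - {B})" using B(1) by blast
      have "partition_on S (insert B (\<sigma> - {B}))" using P e by simp
      then have "partition_on (S - B) (\<sigma> - {B})" unfolding partition_on_insert[OF dj] by simp
      moreover have "\<forall>C\<in>\<sigma> - {B}. card C < m" using sz by blast
      ultimately have "\<sigma> - {B} \<in> FB m (S - B)" unfolding FB_def by simp
      moreover have "B \<in> ?Bs" using B BS sz by simp
      ultimately have "(B, \<sigma> - {B}) \<in> ?X" by simp
      moreover have "\<sigma> = ?\<Phi> (B, \<sigma> - {B})" using e by simp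
      ultimately show "\<sigma> \<in> ?\<Phi> ` ?X" by (rule rev_image_eqI)
    qed
  qed
  have "card (FB m S) = card ?X" using bij_betw_same_card[OF bij] by simp
  also have "\<dots> = (\<Sum>B\<in>?Bs. card (FB m (S - B)))"
    by (rule card_SigmaI) (use finBs fin finite_FB in auto)
  finally show ?thesis .
qed

lemma sum_subsets_by_card:
  assumes fin: "finite S'" 
  shows "(\<Sum>C\<in>{C. C \<subseteq> S' \<and> card C + 2 \<le> m}. h (card C)) =
         (\<Sum>j\<le>card S'. if j + 2 \<le> m then (card S' choose j) * h j else 0)"
proof -
  let ?Cs = "{C. C \<subseteq> S' \<and> card C + 2 \<le> m}"
  have "?Cs \<subseteq> Pow S'" by auto
  then have fCs: "finite ?Cs" using fin by (simp add: finite_subset)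
  have img: "card ` ?Cs \<subseteq> {..card S'}" using fin by (auto intro: card_mono)
  have "(\<Sum>C\<in>?Cs. h (card C)) = (\<Sum>j\<le>card S'. \<Sum>C\<in>{C \<in> ?Cs. card C = j}. h (card C))"
    by (rule sum.group[OF fCs _ img, symmetric]) simp
  also have "\<dots> = (\<Sum>j\<le>card S'. if j + 2 \<le> m then (card S' choose j) * h j else 0)"
  proof (rule sum.cong[OF refl])
    fix j assume "j \<in> {..card S'}"
    show "(\<Sum>C\<in>{C \<in> ?Cs. card C = j}. h (card C)) = (if j + 2 \<le> m then (card S' choose j) * h j else 0)"
    proof (cases "j + 2 \<le> m")
      case True
      then have "{C \<in> ?Cs. card C = j} = {C. C \<subseteq> S' \<and> card C = j}" by auto
      then have "(\<Sum>C\<in>{C \<in> ?Cs. card C = j}. h (card C)) = (\<Sum>C\<in>{C. C \<subseteq> S' \<and> card C = j}. h j)"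
        by simp
      also have "\<dots> = (card S' choose j) * h j" using n_subsets[OF fin, of j] by simp
      finally show ?thesis using True by simp
    next
      case False
      then have E: "{C \<in> ?Cs. card C = j} = {}" by auto
      show ?thesis unfolding E using False by simp
    qed
  qed
  finally show ?thesis .
qed

lemma card_FB: "finite S \<Longrightarrow> card (FB m S) = fr m (card S)"
proof (induction "card S" arbitrary: S rule: less_induct)
  case less
  show ?case
  proof (cases "card S")
    case 0
    then have "S = {}" using less.prems by simp
    then have "FB m S = {{}}" unfolding FB_def by (auto simp: partition_on_empty)
    then show ?thesis using 0 by simp
  next
    case (Suc n)
    then obtain a where a: "a \<in> S" by fastforce
    let ?S' = "S - {a}"
    have fS': "finite ?S'" using less.prems by simp
    have cS': "card ?S' = n" using Suc a less.prems by simp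
    let ?Bs = "{B. a \<in> B \<and> B \<subseteq> S \<and> card B < m}"
    let ?Cs = "{C. C \<subseteq> ?S' \<and> card C + 2 \<le> m}"
    have "card (FB m S) = (\<Sum>B\<in>?Bs. card (FB m (S - B)))" by (rule FB_decomp[OF less.prems a])
    also have "\<dots> = (\<Sum>B\<in>?Bs. fr m (Suc n - card B))"
    proof (rule sum.cong[OF refl])
      fix B assume B: "B \<in> ?Bs"
      then have fB: "finite B" using less.prems finite_subset by auto
      have "card (S - B) < card S" using B less.prems by (intro psubset_card_mono) auto
      then have "card (FB m (S - B)) = fr m (card (S - B))" using less.hyps less.prems by simp
      also have "card (S - B) = Suc n - card B" using B Suc fB by (simp add: card_Diff_subset)
      finally show "card (FB m (S - B)) = fr m (Suc n - card B)" .
    qed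
    also have "\<dots> = (\<Sum>C\<in>?Cs. fr m (n - card C))"
    proof (rule sum.reindex_bij_witness[of _ "insert a" "\<lambda>B. B - {a}"])
      fix C assume C: "C \<in> ?Cs"
      then have "a \<notin> C" "finite C" using fS' finite_subset by auto
      then show "insert a C - {a} = C" by simp
      have "card (insert a C) = Suc (card C)" using \<open>a \<notin> C\<close> \<open>finite C\<close> by simp
      then show "insert a C \<in> ?Bs" using C a by auto
    next
      fix B assume B: "B \<in> ?Bs"
      then show "insert a (B - {a}) = B" by auto
      have fB: "finite B" using B less.prems finite_subset by auto
      have cB: "card B = Suc (card (B - {a}))" using card_Suc_Diff1[OF fB, of a] B by simp
      then show "B - {a} \<in> ?Cs" using B by auto
      show "fr m (n - card (B - {a})) = fr m (Suc n - card B)" using cB by simp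
    qed
    also have "\<dots> = (\<Sum>j\<le>n. if j + 2 \<le> m then (n choose j) * fr m (n - j) else 0)"
      using sum_subsets_by_card[OF fS', where m=m and h="\<lambda>j. fr m (n - j)", unfolded cS'] by simp
    also have "\<dots> = fr m (card S)" using Suc by simp
    finally show ?thesis .
  qed
qed

lemma binpoly_ex: "\<exists>p::rat poly. \<forall>n. poly p (of_nat n) = of_nat ((n + c) choose j)"
proof
  let ?p = "smult (inverse (fact j)) (\<Prod>t<j. [:of_nat c - of_nat j + 1 + of_nat t, 1:]) :: rat poly"
  show "\<forall>n. poly ?p (of_nat n) = of_nat ((n + c) choose j)"
  proof
    fix n
    have "of_nat ((n + c) choose j) = (of_nat (n + c) :: rat) gchoose j" by (rule binomial_gbinomial)
    also have "\<dots> = pochhammer (of_nat (n + c) - of_nat j + 1) j / fact j" by (rule gbinomial_pochhammer')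
    also have "\<dots> = (\<Prod>t<j. of_nat (n + c) - of_nat j + 1 + of_nat t) / fact j"
      by (simp add: pochhammer_prod atLeast0LessThan)
    also have "\<dots> = poly ?p (of_nat n)"
      by (simp add: poly_prod divide_inverse mult.commute algebra_simps)
    finally show "poly ?p (of_nat n) = of_nat ((n + c) choose j)" by simp
  qed
qed

lemma fr_rec:
  assumes m: "m = d + 2"
  shows "fr m (n + Suc d) = (\<Sum>i<Suc d. ((n + d) choose (d - i)) * fr m (n + i))"
proof -
  have "fr m (n + Suc d) = (\<Sum>j\<le>n + d. if j + 2 \<le> m then ((n + d) choose j) * fr m (n + d - j) else 0)"
    by simp
  also have "\<dots> = (\<Sum>j\<in>{j \<in> {..n + d}. j + 2 \<le> m}. ((n + d) choose j) * fr m (n + d - j))"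
    by (rule sum.inter_filter[symmetric]) simp
  also have "{j \<in> {..n + d}. j + 2 \<le> m} = {..<Suc d}" using m by auto
  also have "(\<Sum>j<Suc d. ((n + d) choose j) * fr m (n + d - j)) =
             (\<Sum>i<Suc d. ((n + d) choose (Suc d - Suc i)) * fr m (n + d - (Suc d - Suc i)))"
    by (rule sum.nat_diff_reindex[symmetric])
  also have "\<dots> = (\<Sum>i<Suc d. ((n + d) choose (d - i)) * fr m (n + i))"
    by (rule sum.cong[OF refl]) auto
  finally show ?thesis .
qed

lemma P_rec_fr:
  assumes m: "1 \<le> m"
  shows "P_recursive (fr m)"
proof (cases "m = 1")
  case True
  show ?thesis
  proof (rule P_rec_ap[of 1])
    fix n :: nat assume "1 \<le> n"
    then obtain n' where n: "n = Suc n'" by (cases n) auto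
    have "fr m n = 0" unfolding n using True by simp
    then show "ap 1 (\<lambda>n. of_nat (fr m n)) n = 0" by (simp add: ap_one)
  qed simp
next
  case False
  then obtain d where d: "m = d + 2" using m by (metis add.commute le_Suc_ex one_add_one plus_1_eq_Suc le_antisym not_less_eq_eq)
  define Q where "Q i = (SOME p::rat poly. \<forall>n. poly p (of_nat n) = of_nat ((n + d) choose (d - i)))" for i
  have Q: "poly (Q i) (of_nat n) = of_nat ((n + d) choose (d - i))" for i n
    using someI_ex[OF binpoly_ex[of d "d - i"]] unfolding Q_def by blast
  show ?thesis
  proof (rule P_rec_rec[where k = "Suc d" and Q = Q])
    fix n
    have "of_nat (fr m (n + Suc d)) = (of_nat (\<Sum>i<Suc d. ((n + d) choose (d - i)) * fr m (n + i)) :: rat)"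
      using fr_rec[OF d] by simp
    also have "\<dots> = (\<Sum>i<Suc d. poly (Q i) (of_nat n) * of_nat (fr m (n + i)))"
      by (simp add: Q)
    finally show "of_nat (fr m (n + Suc d)) = (\<Sum>i<Suc d. poly (Q i) (of_nat n) * of_nat (fr m (n + i)))" .
  qed
qed

lemma P_rec_one_block:
  assumes m: "1 \<le> m"
  shows "P_recursive (\<lambda>n. card (R_avoid n (one_block_part m)))"
proof -
  have "card (R_avoid n (one_block_part m)) = fr m n" for n
    unfolding R_avoid_rep[OF m] using card_FB[of "{1..n}" m] unfolding FB_def by simp
  then have "(\<lambda>n. card (R_avoid n (one_block_part m))) = fr m" by auto
  then show ?thesis using P_rec_fr[OF m] by simp
qed

lemma card_R_avoid: "card (R_avoid n \<pi>) = card (Av (rgf \<pi>) n)"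
proof -
  have inj: "inj_on rgf (R_avoid n \<pi>)" using rgf_inj by (rule inj_on_subset) (auto simp: R_avoid_def)
  have "rgf ` R_avoid n \<pi> = Av (rgf \<pi>) n"
  proof (intro set_eqI iffI)
    fix w assume "w \<in> rgf ` R_avoid n \<pi>"
    then obtain \<sigma> where "\<sigma> \<in> Pi_set n" "\<not> contains (rgf \<sigma>) (rgf \<pi>)" "w = rgf \<sigma>"
      unfolding R_avoid_def by blast
    then show "w \<in> Av (rgf \<pi>) n" unfolding Av_def using rgf_RG by blast
  next
    fix w assume "w \<in> Av (rgf \<pi>) n"
    then have w: "w \<in> RG n" "\<not> contains w (rgf \<pi>)" unfolding Av_def by auto
    obtain \<sigma> where "\<sigma> \<in> Pi_set n" "rgf \<sigma> = w" using rgf_surj[OF w(1)] by blast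
    then show "w \<in> rgf ` R_avoid n \<pi>" unfolding R_avoid_def using w(2) by blast
  qed
  then show ?thesis using card_image[OF inj] by simp
qed

lemma RG3:
  assumes "w \<in> RG 3"
  shows "w = [1,1,1] \<or> w = [1,1,2] \<or> w = [1,2,1] \<or> w = [1,2,2] \<or> w = [1,2,3]"
proof -
  have L: "length w = 3" and R: "rgfw w" using assms unfolding RG_def by auto
  obtain a t where "w = a # t" using L by (cases w) auto
  moreover obtain b u where "t = b # u" using L calculation by (cases t) auto
  moreover obtain c where "u = [c]" using L calculation by (cases u) auto
  ultimately have w: "w = [a,b,c]" by simp
  have R3: "rgfw ([a,b]@[c])" using R w by simp
  have 1: "rgfw [a,b]" "0 < c" "c \<le> Suc (mx [a,b])" using R3[unfolded rgfw_snoc] by simp_all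
  have R2: "rgfw ([a]@[b])" using 1(1) by simp
  have 2: "rgfw [a]" "0 < b" "b \<le> Suc (mx [a])" using R2[unfolded rgfw_snoc] by simp_all
  have R1: "rgfw ([]@[a])" using 2(1) by simp
  have 3: "0 < a" "a \<le> Suc (mx [])" using R1[unfolded rgfw_snoc] by simp_all
  have a: "a = 1" using 3 by simp
  have mb: "mx [a] = 1" "mx [a,b] = max 1 b" using a by (simp_all add: mx_Cons)
  have "b = 1 \<or> b = 2" using 2 mb by auto
  then show ?thesis
  proof
    assume "b = 1"
    then have "c = 1 \<or> c = 2" using 1 mb by auto
    then show ?thesis using w a \<open>b = 1\<close> by auto
  next
    assume "b = 2"
    then have "c = 1 \<or> c = 2 \<or> c = 3" using 1 mb by auto
    then show ?thesis using w a \<open>b = 2\<close> by auto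
  qed
qed

theorem theorem4p4:
  shows "(\<forall>m::nat. m \<ge> 1 \<longrightarrow>
            P_recursive (\<lambda>n. card (R_avoid n (singletons_part m))) \<and>
            P_recursive (\<lambda>n. card (R_avoid n (one_block_part m))))
       \<and> (\<forall>\<pi>. \<pi> \<in> Pi_set 3 \<longrightarrow> P_recursive (\<lambda>n. card (R_avoid n \<pi>)))"
proof (intro conjI allI impI)
  fix m :: nat assume m: "m \<ge> 1"
  show "P_recursive (\<lambda>n. card (R_avoid n (singletons_part m)))"
    unfolding card_R_avoid rgf_singletons by (rule P_rec_upt)
  show "P_recursive (\<lambda>n. card (R_avoid n (one_block_part m)))"
    using P_rec_one_block[OF m] .
next
  fix \<pi> assume \<pi>: "\<pi> \<in> Pi_set 3"
  have "rgf \<pi> \<in> RG 3" using rgf_RG[OF \<pi>] .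
  then have cases: "rgf \<pi> = [1,1,1] \<or> rgf \<pi> = [1,1,2] \<or> rgf \<pi> = [1,2,1] \<or> rgf \<pi> = [1,2,2] \<or> rgf \<pi> = [1,2,3]"
    by (rule RG3)
  have e: "(\<lambda>n. card (R_avoid n \<pi>)) = (\<lambda>n. card (Av (rgf \<pi>) n))" using card_R_avoid by presburger
  have "P_recursive (\<lambda>n. card (Av (rgf \<pi>) n))"
  proof -
    { assume "rgf \<pi> = [1,1,1]"
      then have "rgf \<pi> = rgf (one_block_part 3)" using rgf_one_block[of 3] by (simp add: numeral_eq_Suc)
      then have "(\<lambda>n. card (Av (rgf \<pi>) n)) = (\<lambda>n. card (R_avoid n (one_block_part 3)))"
        using card_R_avoid by presburger
      then have ?thesis using P_rec_one_block[of 3] by simp }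
    moreover
    { assume "rgf \<pi> = [1,2,3]"
      then have "rgf \<pi> = [1..<Suc 3]" by (simp add: numeral_eq_Suc upt_Suc)
      then have ?thesis using P_rec_upt[of 3] by simp }
    moreover
    { assume "rgf \<pi> = [1,1,2]"
      then have ?thesis using double_Av112 by (simp add: P_rec_double) }
    moreover
    { assume "rgf \<pi> = [1,2,1]"
      then have ?thesis using double_Av121 by (simp add: P_rec_double) }
    moreover
    { assume "rgf \<pi> = [1,2,2]"
      then have ?thesis using double_Av122 by (simp add: P_rec_double) }
    ultimately show ?thesis using cases by blast
  qed
  then show "P_recursive (\<lambda>n. card (R_avoid n \<pi>))" unfolding e .
qed

end
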